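(* Let $u,v\in A_N$ be commuting even permutations, viewed as permutation matrices acting on $\mathbb C^N$, and let $T=\langle u,v\rangle$. Then: (1) $T$ satisfies the parity condition (PC) if and only if $u^*(\xi_v)=\xi_v$ and $v^*(\xi_u)=\xi_u$; (2) if $T$ does not satisfy (PC), then $u^*(\xi_v)=-\xi_v$ or $v^*(\xi_u)=-\xi_u$.
   Context: Parity condition (PC) for a group $T$ of permutations of coordinates of $\mathbb C^N$: for every subgroup $T'\subseteq T$, $\dim(\mathbb C^N)^{T'}\equiv N\pmod 2$. For a linear map $w$ let $\mathrm{Fix}(w)$ be its eigenvalue-1 subspace and $M_w$ the sum of its other eigenspaces; $\xi_w$ is a formal generator, and for $v$ commuting with $w$ the action is $v^*(\xi_w)=\det(v|_{M_w})^{-1}\xi_w$. *)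

theory Defs
  imports "HOL-Analysis.Analysis" "HOL-Combinatorics.Permutations"
begin

text \<open>Coordinates of C^N are indexed by a finite type 'n, N = CARD('n).
  Linear algebra over C uses the interpretation vec (scalar multiplication *s).\<close>

text \<open>Permutation matrix of p: sends the standard basis vector e_j to e_(p j).\<close>
definition perm_mat :: "('n::finite \<Rightarrow> 'n) \<Rightarrow> complex^'n^'n" where
  "perm_mat p = (\<chi> i j. if i = p j then 1 else 0)"

text \<open>Eigenvalue-1 subspace of a linear map.\<close>
definition Fix :: "complex^'n^'n \<Rightarrow> (complex^'n) set" where
  "Fix A = {x. A *v x = x}"

text \<open>Sum of the eigenspaces of A for eigenvalues different from 1.\<close>
definition M_sp :: "complex^'n^'n \<Rightarrow> (complex^'n) set" where
  "M_sp A = vec.span (\<Union>c\<in>- {1}. {x. A *v x = c *s x})"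

text \<open>Leibniz determinant of a k x k matrix given by entries B i j, i, j < k.\<close>
definition det_fn :: "nat \<Rightarrow> (nat \<Rightarrow> nat \<Rightarrow> complex) \<Rightarrow> complex" where
  "det_fn k B = (\<Sum>p | p permutes {..<k}. of_int (sign p) * (\<Prod>i<k. B i (p i)))"

text \<open>b 0, ..., b (k-1) is a basis (over C) of the subspace S.\<close>
definition is_cbasis :: "(complex^'n) set \<Rightarrow> nat \<Rightarrow> (nat \<Rightarrow> complex^'n) \<Rightarrow> bool" where
  "is_cbasis S k b \<longleftrightarrow> inj_on b {..<k} \<and> vec.independent (b ` {..<k})
     \<and> vec.span (b ` {..<k}) = S"

text \<open>Determinant of the restriction of A to an A-invariant subspace S, computed
  as the determinant of the matrix of A with respect to a basis of S.\<close>
definition det_on :: "complex^'n^'n \<Rightarrow> (complex^'n) set \<Rightarrow> complex" where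
  "det_on A S = (SOME d. \<exists>k b B. is_cbasis S k b
      \<and> (\<forall>j<k. A *v b j = (\<Sum>i<k. B i j *s b i)) \<and> d = det_fn k B)"

text \<open>For commuting v, w: v^*(xi_w) = pullback_coeff v w * xi_w, where
  pullback_coeff v w = det(v restricted to M_w)^(-1).\<close>
definition pullback_coeff :: "complex^'n^'n \<Rightarrow> complex^'n^'n \<Rightarrow> complex" where
  "pullback_coeff v w = inverse (det_on v (M_sp w))"

text \<open>Subgroup of the permutation group of 'n generated by a set S of permutations.\<close>
inductive_set perm_gen :: "('n \<Rightarrow> 'n) set \<Rightarrow> ('n \<Rightarrow> 'n) set" for S where
  gen_id: "id \<in> perm_gen S"
| gen_base: "g \<in> S \<Longrightarrow> g \<in> perm_gen S"
| gen_comp: "g \<in> perm_gen S \<Longrightarrow> h \<in> perm_gen S \<Longrightarrow> g \<circ> h \<in> perm_gen S"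
| gen_inv: "g \<in> perm_gen S \<Longrightarrow> inv g \<in> perm_gen S"

text \<open>H is a subgroup of the permutation group T.\<close>
definition is_subgroup :: "('n \<Rightarrow> 'n) set \<Rightarrow> ('n \<Rightarrow> 'n) set \<Rightarrow> bool" where
  "is_subgroup H T \<longleftrightarrow> H \<subseteq> T \<and> id \<in> H \<and> (\<forall>g\<in>H. \<forall>h\<in>H. g \<circ> h \<in> H)
     \<and> (\<forall>g\<in>H. inv g \<in> H)"

text \<open>Subspace of C^N fixed by all elements of a group of coordinate permutations.\<close>
definition fixed_space :: "('n::finite \<Rightarrow> 'n) set \<Rightarrow> (complex^'n) set" where
  "fixed_space H = {x. \<forall>g\<in>H. perm_mat g *v x = x}"

text \<open>Parity condition (PC).\<close>
definition parity_condition :: "('n::finite \<Rightarrow> 'n) set \<Rightarrow> bool" where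
  "parity_condition T \<longleftrightarrow> (\<forall>H. is_subgroup H T \<longrightarrow>
      even (vec.dim (fixed_space H) + CARD('n)))"

end

theory Submission
  imports Defs "HOL-Combinatorics.Cycles" "Jordan_Normal_Form.Determinant"
begin

definition orb :: "('a \<Rightarrow> 'a) \<Rightarrow> 'a \<Rightarrow> 'a set" where
  "orb p a = range (\<lambda>i. (p ^^ i) a)"

lemma evenperm_cycle_of_list:
  "distinct cs \<Longrightarrow> cs \<noteq> [] \<Longrightarrow> evenperm (cycle_of_list cs) \<longleftrightarrow> odd (length cs)"
proof (induct cs rule: cycle_of_list.induct)
  case (1 i j cs)
  have pj: "permutation (cycle_of_list (j # cs))" by (rule permutation_of_cycle)
  have "evenperm (cycle_of_list (i # j # cs)) \<longleftrightarrow> (evenperm (Transposition.transpose i j) = evenperm (cycle_of_list (j # cs)))"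
    by (simp add: evenperm_comp[OF permutation_swap_id pj])
  also have "\<dots> \<longleftrightarrow> \<not> evenperm (cycle_of_list (j # cs))"
    using 1(2) by (simp add: evenperm_swap)
  finally have c: "evenperm (cycle_of_list (i # j # cs)) \<longleftrightarrow> \<not> evenperm (cycle_of_list (j # cs))" .
  have IH: "evenperm (cycle_of_list (j # cs)) \<longleftrightarrow> odd (length (j # cs))"
    using 1 by simp
  have "odd (length (i # j # cs)) \<longleftrightarrow> \<not> odd (length (j # cs))" by simp
  with c IH show ?case by blast
qed auto

lemma orb_perm_sym:
  assumes "permutation p" "b \<in> orb p a" shows "a \<in> orb p b"
proof -
  obtain i where b: "b = (p ^^ i) a" using assms(2) unfolding orb_def by auto
  obtain n where n: "p ^^ n = id" "n > 0" using permutation_is_nilpotent[OF assms(1)] by blast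
  have "(p ^^ (n * i)) a = a" by (metis funpow_mult n(1) id_funpow id_apply)
  moreover have "n * i = (n * i - i) + i"
    using n(2) by (cases n) auto
  ultimately have "(p ^^ (n * i - i)) b = a"
    unfolding b by (metis funpow_add o_apply)
  thus ?thesis unfolding orb_def by auto
qed

lemma orb_trans:
  assumes "b \<in> orb p a" "c \<in> orb p b" shows "c \<in> orb p a"
proof -
  obtain i j where "b = (p ^^ i) a" "c = (p ^^ j) b" using assms unfolding orb_def by auto
  hence "c = (p ^^ (j + i)) a" by (simp add: funpow_add)
  thus ?thesis unfolding orb_def by auto
qed

lemma orb_self: "a \<in> orb p a"
  unfolding orb_def by (auto intro: range_eqI[of _ _ 0])

lemma orb_eq:
  assumes "permutation p" "b \<in> orb p a" shows "orb p b = orb p a"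
proof
  show "orb p b \<subseteq> orb p a" using orb_trans[OF assms(2)] by (rule subsetI)
  have "a \<in> orb p b" using orb_perm_sym[OF assms] .
  thus "orb p a \<subseteq> orb p b" using orb_trans[of a p b] by blast
qed

lemma orb_eq_iff:
  assumes "permutation p" shows "orb p a = orb p b \<longleftrightarrow> b \<in> orb p a"
proof
  assume "orb p a = orb p b" thus "b \<in> orb p a" using orb_self[of b p] by simp
qed (rule orb_eq[OF assms, symmetric])

lemma sign_cycles:
  assumes "p permutes S" "finite S"
  shows "evenperm p \<longleftrightarrow> even (card S + card (orb p ` S))"
  using assms
proof (induct "card S" arbitrary: S p rule: less_induct)
  case less show ?case
  proof (cases "S = {}")
    case True thus ?thesis using less(2) by (simp add: permutes_empty)
  next
    case False
    have is_permutation: "permutation p"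
      using less(2-3) unfolding permutation_permutes by blast
    then obtain s where "s \<in> S" using False by blast
    define q where "q = (\<lambda>y. if y \<in> (S - set (support p s)) then p y else y)"
    define C where "C = set (support p s)"
    have C: "C = orb p s" unfolding C_def orb_def support_set[OF is_permutation] ..
    have decomp: "(cycle_of_list (support p s) \<circ> q) = p"
    proof
      fix a
      consider "a \<in> S - set (support p s)" | "a \<in> set (support p s)" | "a \<notin> S" "a \<notin> set (support p s)"
        by blast
      thus "((cycle_of_list (support p s) \<circ> q)) a = p a"
      proof cases
        case 1
        have "(p ^^ 1) a \<in> set (support p a)"
          unfolding support_set[OF is_permutation] by blast
        with \<open>a \<in> S - set (support p s)\<close> have "p a \<notin> set (support p s)"
          using disjoint_support'[OF is_permutation, of a s] by auto
        with \<open>a \<in> S - set (support p s)\<close> show ?thesis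
          using id_outside_supp[of _ "support p s"] unfolding q_def by simp
      next
        case 2 thus ?thesis
          using cycle_restrict[OF is_permutation] unfolding q_def by simp
      next
        case 3 thus ?thesis
          using id_outside_supp[OF 3(2)] less(2) permutes_not_in unfolding q_def by fastforce
      qed
    qed
    from \<open>s \<in> S\<close> have "(p ^^ i) s \<in> S" for i
      unfolding permutes_in_image[OF permutes_funpow[OF less(2)]] .
    hence CS: "C \<subseteq> S" unfolding C orb_def by auto
    have "s \<in> C" unfolding C by (rule orb_self)
    with \<open>s \<in> S\<close> have lt: "card (S - C) < card S"
      using less(3) by (metis DiffE card_seteq linorder_not_le subsetI)
    have qperm: "q permutes (S - C)"
      unfolding q_def C_def by (rule semidecomposition[OF less(2-3)])
    have IH: "evenperm q \<longleftrightarrow> even (card (S - C) + card (orb q ` (S - C)))"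
      using less(1)[OF lt qperm] less(3) by blast
    have cperm: "permutation (cycle_of_list (support p s))" by (rule permutation_of_cycle)
    have qp: "permutation q" using qperm less(3) permutation_permutes by blast
    have dist: "distinct (support p s)" by (rule cycle_of_permutation[OF is_permutation])
    have ne: "support p s \<noteq> []" using \<open>s \<in> C\<close> C_def by auto
    have cardC: "card C = length (support p s)" unfolding C_def using distinct_card[OF dist] .
    have ev: "evenperm p \<longleftrightarrow> (odd (card C) \<longleftrightarrow> evenperm q)"
    proof -
      have "evenperm p \<longleftrightarrow> (evenperm (cycle_of_list (support p s)) \<longleftrightarrow> evenperm q)"
        using evenperm_comp[OF cperm qp] decomp by simp
      moreover have "evenperm (cycle_of_list (support p s)) \<longleftrightarrow> odd (card C)"
        using evenperm_cycle_of_list[OF dist ne] cardC by simp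
      ultimately show ?thesis by simp
    qed
    \<comment> \<open>orbit structure\<close>
    have inv_SC: "p y \<in> S - C" if "y \<in> S - C" for y
    proof -
      have "p y \<in> S" using that less(2) by (simp add: permutes_in_image)
      moreover have "p y \<notin> C"
      proof
        assume a: "p y \<in> C"
        have "p y = (p ^^ 1) y" by simp
        hence "p y \<in> orb p y" unfolding orb_def by blast
        hence b: "y \<in> orb p (p y)" by (rule orb_perm_sym[OF is_permutation])
        have "y \<in> C" using orb_trans[OF a[unfolded C] b] unfolding C .
        thus False using that by simp
      qed
      ultimately show ?thesis by simp
    qed
    have pow_eq: "(q ^^ i) y = (p ^^ i) y \<and> (p ^^ i) y \<in> S - C" if "y \<in> S - C" for y i
    proof (induct i)
      case 0 thus ?case using that by simp
    next
      case (Suc i)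
      hence h: "(q ^^ i) y = (p ^^ i) y" "(p ^^ i) y \<in> S - C" by auto
      have "q ((p ^^ i) y) = p ((p ^^ i) y)" using h(2) unfolding q_def C_def by simp
      with h inv_SC[OF h(2)] show ?case by simp
    qed
    have orbq: "orb q y = orb p y" if "y \<in> S - C" for y
      unfolding orb_def using pow_eq[OF that] by simp
    have orbC: "orb p y = C" if "y \<in> C" for y
      using orb_eq[OF is_permutation] that unfolding C by blast
    have "orb p ` S = insert C (orb q ` (S - C))"
    proof -
      have "S = C \<union> (S - C)" using CS by blast
      hence "orb p ` S = orb p ` C \<union> orb p ` (S - C)" by (metis image_Un)
      also have "orb p ` C = {C}" using orbC \<open>s \<in> C\<close> by blast
      also have "orb p ` (S - C) = orb q ` (S - C)" using orbq by simp
      finally show ?thesis by simp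
    qed
    moreover have "C \<notin> orb q ` (S - C)"
    proof
      assume "C \<in> orb q ` (S - C)"
      then obtain y where "y \<in> S - C" "C = orb q y" by blast
      thus False using orb_self[of y q] by blast
    qed
    moreover have "finite (orb q ` (S - C))" using less(3) by simp
    ultimately have c1: "card (orb p ` S) = Suc (card (orb q ` (S - C)))" by simp
    have c2: "card S = card C + card (S - C)"
      using CS less(3) by (metis card_Diff_subset card_mono finite_subset le_add_diff_inverse)
    show ?thesis unfolding ev IH c1 c2 by presburger
  qed
qed

section \<open>Orbits of sets of permutations\<close>

definition relg :: "('a \<Rightarrow> 'a) set \<Rightarrow> 'a \<Rightarrow> 'a \<Rightarrow> bool" where
  "relg G x y \<longleftrightarrow> (\<exists>h\<in>perm_gen G. h x = y)"

definition cls :: "('a \<Rightarrow> 'a) set \<Rightarrow> 'a \<Rightarrow> 'a set" where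
  "cls G x = {y. relg G x y}"

definition orbs :: "('a \<Rightarrow> 'a) set \<Rightarrow> 'a set set" where
  "orbs G = range (cls G)"

definition tau :: "('a \<Rightarrow> 'a) set \<Rightarrow> ('a \<Rightarrow> 'a) \<Rightarrow> 'a set \<Rightarrow> 'a set" where
  "tau G g = restrict_id (\<lambda>X. g ` X) (orbs G)"

lemma perm_gen_bij:
  assumes "\<forall>g\<in>G. bij g" "h \<in> perm_gen G" shows "bij h"
  using assms(2)
proof (induct rule: perm_gen.induct)
  case gen_id thus ?case by (rule bij_id)
next
  case (gen_base g) thus ?case using assms(1) by blast
next
  case (gen_comp g h) thus ?case using bij_comp by blast
next
  case (gen_inv g) thus ?case using bij_imp_bij_inv by blast
qed

lemma perm_gen_mono:
  assumes "A \<subseteq> B" "h \<in> perm_gen A" shows "h \<in> perm_gen B"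
  using assms(2)
proof (induct rule: perm_gen.induct)
  case gen_id thus ?case by (rule perm_gen.gen_id)
next
  case (gen_base g) thus ?case using assms(1) by (blast intro: perm_gen.gen_base)
next
  case (gen_comp g h) thus ?case by (blast intro: perm_gen.gen_comp)
next
  case (gen_inv g) thus ?case by (blast intro: perm_gen.gen_inv)
qed

lemma perm_gen_sub:
  assumes "A \<subseteq> perm_gen B" "h \<in> perm_gen A" shows "h \<in> perm_gen B"
  using assms(2)
proof (induct rule: perm_gen.induct)
  case gen_id thus ?case by (rule perm_gen.gen_id)
next
  case (gen_base g) thus ?case using assms(1) by blast
next
  case (gen_comp g h) thus ?case by (blast intro: perm_gen.gen_comp)
next
  case (gen_inv g) thus ?case by (blast intro: perm_gen.gen_inv)
qed

lemma perm_gen_eqI: "A \<subseteq> perm_gen B \<Longrightarrow> B \<subseteq> perm_gen A \<Longrightarrow> perm_gen A = perm_gen B"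
  using perm_gen_sub by blast

lemma orbs_cong: "perm_gen A = perm_gen B \<Longrightarrow> orbs A = orbs B"
  unfolding orbs_def cls_def relg_def by simp

lemma relg_refl: "relg G x x"
  unfolding relg_def using perm_gen.gen_id[of G] id_apply by metis

lemma relg_sym:
  assumes "\<forall>g\<in>G. bij g" "relg G x y" shows "relg G y x"
proof -
  obtain h where h: "h \<in> perm_gen G" "h x = y" using assms(2) unfolding relg_def by blast
  have "bij h" using perm_gen_bij[OF assms(1) h(1)] .
  hence "inv_into UNIV h y = x" using h(2) by (metis bij_inv_eq_iff)
  thus ?thesis unfolding relg_def using perm_gen.gen_inv[OF h(1)] by blast
qed

lemma relg_trans:
  assumes "relg G x y" "relg G y z" shows "relg G x z"
proof -
  obtain h where h: "h \<in> perm_gen G" "h x = y" using assms(1) unfolding relg_def by blast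
  obtain k where k: "k \<in> perm_gen G" "k y = z" using assms(2) unfolding relg_def by blast
  have "(k \<circ> h) x = z" using h k by simp
  thus ?thesis unfolding relg_def using perm_gen.gen_comp[OF k(1) h(1)] by blast
qed

lemma cls_eq_iff:
  assumes "\<forall>g\<in>G. bij g" shows "cls G x = cls G y \<longleftrightarrow> relg G x y"
proof
  assume "cls G x = cls G y"
  moreover have "y \<in> cls G y" unfolding cls_def using relg_refl by simp
  ultimately have "y \<in> cls G x" by simp
  thus "relg G x y" unfolding cls_def by simp
next
  assume r: "relg G x y"
  have r2: "relg G y x" using relg_sym[OF assms r] .
  have "relg G x z \<longleftrightarrow> relg G y z" for z using relg_trans[OF r, of z] relg_trans[OF r2, of z] by blast
  hence "relg G x = relg G y" by (intro ext)
  thus "cls G x = cls G y" unfolding cls_def by simp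
qed

lemma perm_gen_commute:
  assumes "\<forall>g\<in>G. bij g" "bij f" "\<forall>h\<in>G. f \<circ> h = h \<circ> f" "k \<in> perm_gen G"
  shows "f \<circ> k = k \<circ> f"
  using assms(4)
proof (induct rule: perm_gen.induct)
  case gen_id thus ?case by simp
next
  case (gen_base g) thus ?case using assms(3) by blast
next
  case (gen_comp g h) thus ?case by (metis comp_assoc)
next
  case (gen_inv g)
  have bg: "bij g" using perm_gen_bij[OF assms(1) gen_inv(1)] .
  have s1: "g \<circ> inv_into UNIV g = id" using surj_iff[THEN iffD1, OF bij_is_surj[OF bg]] .
  have s2: "inv_into UNIV g \<circ> g = id" using inj_iff[THEN iffD1, OF bij_is_inj[OF bg]] .
  have "inv_into UNIV g \<circ> f = inv_into UNIV g \<circ> f \<circ> (g \<circ> inv_into UNIV g)" unfolding s1 by simp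
  also have "\<dots> = inv_into UNIV g \<circ> (f \<circ> g) \<circ> inv_into UNIV g" by (simp add: comp_assoc)
  also have "\<dots> = inv_into UNIV g \<circ> (g \<circ> f) \<circ> inv_into UNIV g" by (simp only: gen_inv(2))
  also have "\<dots> = (inv_into UNIV g \<circ> g) \<circ> f \<circ> inv_into UNIV g" by (simp add: comp_assoc)
  also have "\<dots> = f \<circ> inv_into UNIV g" unfolding s2 by simp
  finally show ?case by simp
qed

lemma funpow_commute:
  assumes "f \<circ> k = k \<circ> f" shows "(f ^^ i) \<circ> k = k \<circ> (f ^^ i)"
proof (induct i)
  case 0 thus ?case by simp
next
  case (Suc i)
  have "(f ^^ Suc i) \<circ> k = f \<circ> ((f ^^ i) \<circ> k)" by (simp add: comp_assoc)
  also have "\<dots> = (f \<circ> k) \<circ> (f ^^ i)" by (simp only: Suc comp_assoc)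
  also have "\<dots> = k \<circ> (f ^^ Suc i)" by (simp only: assms comp_assoc funpow.simps(2))
  finally show ?case .
qed

lemma bij_finite_order:
  assumes "bij (g :: 'a::finite \<Rightarrow> 'a)" obtains n where "g ^^ n = id" "n > 0"
proof -
  have "g permutes UNIV" using assms by (intro bij_imp_permutes) auto
  hence "permutation g" using permutes_imp_permutation[of UNIV g] by simp
  thus ?thesis using permutation_is_nilpotent that by blast
qed

lemma perm_gen_insert:
  fixes g :: "'a::finite \<Rightarrow> 'a"
  assumes "\<forall>h\<in>G. bij h" "bij g" "\<forall>h\<in>G. g \<circ> h = h \<circ> g"
  shows "perm_gen (insert g G) = {k \<circ> (g ^^ i) | k i. k \<in> perm_gen G}"
proof
  obtain n where n: "g ^^ n = id" "n > 0" using bij_finite_order[OF assms(2)] by blast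
  have com: "k \<circ> (g ^^ i) = (g ^^ i) \<circ> k" if "k \<in> perm_gen G" for k i
    using funpow_commute[OF perm_gen_commute[OF assms that]] by simp
  show "perm_gen (insert g G) \<subseteq> {k \<circ> (g ^^ i) | k i. k \<in> perm_gen G}"
  proof
    fix x assume "x \<in> perm_gen (insert g G)"
    thus "x \<in> {k \<circ> (g ^^ i) | k i. k \<in> perm_gen G}"
    proof (induct rule: perm_gen.induct)
      case gen_id
      have "id = id \<circ> (g ^^ 0)" by simp
      thus ?case using perm_gen.gen_id by blast
    next
      case (gen_base h)
      show ?case
      proof (cases "h = g")
        case True
        hence "h = id \<circ> (g ^^ 1)" by simp
        thus ?thesis using perm_gen.gen_id by blast
      next
        case False
        hence "h \<in> perm_gen G" using gen_base perm_gen.gen_base by blast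
        moreover have "h = h \<circ> (g ^^ 0)" by simp
        ultimately show ?thesis by blast
      qed
    next
      case (gen_comp a b)
      then obtain k i k' j where kk: "k \<in> perm_gen G" "a = k \<circ> (g ^^ i)" "k' \<in> perm_gen G" "b = k' \<circ> (g ^^ j)"
        by blast
      have "a \<circ> b = k \<circ> ((g ^^ i) \<circ> k') \<circ> (g ^^ j)" using kk by (simp add: comp_assoc)
      also have "\<dots> = (k \<circ> k') \<circ> (g ^^ (i + j))" by (simp only: com[OF kk(3), of i, symmetric] comp_assoc funpow_add)
      finally show ?case using perm_gen.gen_comp[OF kk(1,3)] by blast
    next
      case (gen_inv a)
      then obtain k i where kk: "k \<in> perm_gen G" "a = k \<circ> (g ^^ i)" by blast
      have bk: "bij k" using perm_gen_bij[OF assms(1) kk(1)] .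
      have bgi: "bij (g ^^ i)" using assms(2) by (simp add: bij_betw_funpow)
      have "(g ^^ i) \<circ> (g ^^ (i * (n - 1))) = g ^^ (i * n)"
        using n(2) by (simp add: funpow_add[symmetric] algebra_simps)
      also have "\<dots> = id" by (metis funpow_mult n(1) id_funpow mult.commute)
      finally have gi: "(g ^^ i) \<circ> (g ^^ (i * (n - 1))) = id" .
      have ig: "inv_into UNIV (g ^^ i) = g ^^ (i * (n - 1))"
        using gi bgi by (metis bij_is_inj inv_o_cancel left_right_inverse_eq o_inv_o_cancel)
      have "inv_into UNIV a = inv_into UNIV (g ^^ i) \<circ> inv_into UNIV k" unfolding kk(2) using bk bgi by (simp add: o_inv_distrib)
      also have "\<dots> = inv_into UNIV k \<circ> (g ^^ (i * (n - 1)))" unfolding ig using com[OF perm_gen.gen_inv[OF kk(1)]] by simp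
      finally show ?case using perm_gen.gen_inv[OF kk(1)] by blast
    qed
  qed
  show "{k \<circ> (g ^^ i) | k i. k \<in> perm_gen G} \<subseteq> perm_gen (insert g G)"
  proof clarify
    fix k i assume "k \<in> perm_gen G"
    hence k: "k \<in> perm_gen (insert g G)" using perm_gen_mono[of G "insert g G"] by blast
    have "g ^^ i \<in> perm_gen (insert g G)"
    proof (induct i)
      case 0 thus ?case using perm_gen.gen_id by (simp only: funpow.simps(1))
    next
      case (Suc i)
      have "g \<in> perm_gen (insert g G)" by (simp add: perm_gen.gen_base)
      from perm_gen.gen_comp[OF this Suc] show ?case by (simp only: funpow.simps(2))
    qed
    thus "k \<circ> (g ^^ i) \<in> perm_gen (insert g G)" using perm_gen.gen_comp[OF k] by blast
  qed
qed

lemma cls_image: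
  assumes G: "\<forall>h\<in>G. bij h" and g: "bij g" and c: "\<forall>h\<in>G. g \<circ> h = h \<circ> g"
  shows "g ` cls G x = cls G (g x)"
proof
  show "g ` cls G x \<subseteq> cls G (g x)"
  proof
    fix z assume "z \<in> g ` cls G x"
    then obtain y where y: "y \<in> cls G x" "z = g y" by blast
    then obtain h where h: "h \<in> perm_gen G" "h x = y" unfolding cls_def relg_def by blast
    have "g \<circ> h = h \<circ> g" using perm_gen_commute[OF G g c h(1)] .
    hence "h (g x) = z" using h y(2) by (metis comp_apply)
    thus "z \<in> cls G (g x)" unfolding cls_def relg_def using h(1) by blast
  qed
  show "cls G (g x) \<subseteq> g ` cls G x"
  proof
    fix z assume "z \<in> cls G (g x)"
    then obtain h where h: "h \<in> perm_gen G" "h (g x) = z" unfolding cls_def relg_def by blast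
    have "g \<circ> h = h \<circ> g" using perm_gen_commute[OF G g c h(1)] .
    hence "z = g (h x)" using h by (metis comp_apply)
    moreover have "h x \<in> cls G x" unfolding cls_def relg_def using h(1) by blast
    ultimately show "z \<in> g ` cls G x" by blast
  qed
qed

lemma finite_orbs: "finite (orbs (G :: ('a::finite \<Rightarrow> 'a) set))"
  by (rule finite_subset[OF subset_UNIV]) simp

lemma tau_bij:
  assumes G: "\<forall>h\<in>G. bij h" and g: "bij g" and c: "\<forall>h\<in>G. g \<circ> h = h \<circ> g"
  shows "bij_betw (\<lambda>X. g ` X) (orbs G) (orbs G)"
proof (rule bij_betw_imageI)
  show "inj_on (\<lambda>X. g ` X) (orbs G)"
    using bij_is_inj[OF g] by (auto simp: inj_on_def inj_image_eq_iff)
  show "(\<lambda>X. g ` X) ` orbs G = orbs G"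
  proof
    show "(\<lambda>X. g ` X) ` orbs G \<subseteq> orbs G" unfolding orbs_def using cls_image[OF G g c] by auto
    show "orbs G \<subseteq> (\<lambda>X. g ` X) ` orbs G"
    proof
      fix X assume "X \<in> orbs G"
      then obtain x where x: "X = cls G x" unfolding orbs_def by blast
      have "g (inv_into UNIV g x) = x" using g by (simp add: bij_is_surj surj_f_inv_f)
      hence "X = g ` cls G (inv_into UNIV g x)" using cls_image[OF G g c, of "inv_into UNIV g x"] x by simp
      thus "X \<in> (\<lambda>X. g ` X) ` orbs G" unfolding orbs_def by blast
    qed
  qed
qed

lemma tau_permutes:
  assumes G: "\<forall>h\<in>G. bij h" and g: "bij g" and c: "\<forall>h\<in>G. g \<circ> h = h \<circ> g"
  shows "tau G g permutes orbs G"
  unfolding tau_def by (rule permutes_restrict_id[OF tau_bij[OF assms]])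

lemma cls_in_orbs: "cls G x \<in> orbs G"
  unfolding orbs_def by blast

lemma tau_pow:
  assumes G: "\<forall>h\<in>G. bij h" and g: "bij g" and c: "\<forall>h\<in>G. g \<circ> h = h \<circ> g"
  shows "(tau G g ^^ i) (cls G x) = cls G ((g ^^ i) x)"
proof (induct i)
  case 0 thus ?case by simp
next
  case (Suc i)
  have "(tau G g ^^ Suc i) (cls G x) = tau G g (cls G ((g ^^ i) x))" using Suc by simp
  also have "\<dots> = g ` cls G ((g ^^ i) x)" unfolding tau_def by (simp add: cls_in_orbs)
  also have "\<dots> = cls G ((g ^^ Suc i) x)" using cls_image[OF G g c] by simp
  finally show ?case .
qed

lemma card_range_eq:
  assumes "\<And>x y. F x = F y \<longleftrightarrow> F' x = F' y"
  shows "card (range F) = card (range F')"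
proof -
  define phi where "phi = (\<lambda>A. F' (SOME x. F x = A))"
  have ph: "phi (F x) = F' x" for x
  proof -
    have "F (SOME x'. F x' = F x) = F x" by (rule someI) (rule refl)
    thus ?thesis unfolding phi_def using assms by blast
  qed
  have "inj_on phi (range F)"
  proof (rule inj_onI)
    fix A B assume "A \<in> range F" "B \<in> range F" "phi A = phi B"
    then obtain x y where "A = F x" "B = F y" "phi (F x) = phi (F y)" by blast
    thus "A = B" using ph assms by metis
  qed
  moreover have "phi ` range F = range F'" using ph by (auto simp: image_iff)
  ultimately show ?thesis by (metis card_image)
qed

lemma orbs_insert_card:
  fixes G :: "('a::finite \<Rightarrow> 'a) set"
  assumes G: "\<forall>h\<in>G. bij h" and g: "bij g" and c: "\<forall>h\<in>G. g \<circ> h = h \<circ> g"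
  shows "card (orbs (insert g G)) = card (orb (tau G g) ` orbs G)"
proof -
  have tp: "permutation (tau G g)"
    using permutes_imp_permutation[OF finite_orbs tau_permutes[OF assms]] .
  have G': "\<forall>h\<in>insert g G. bij h" using G g by blast
  have pg: "perm_gen (insert g G) = {k \<circ> (g ^^ i) | k i. k \<in> perm_gen G}"
    by (rule perm_gen_insert[OF G g c])
  have key: "orb (tau G g) (cls G x) = orb (tau G g) (cls G y) \<longleftrightarrow>
      cls (insert g G) x = cls (insert g G) y" for x y
  proof -
    have "orb (tau G g) (cls G x) = orb (tau G g) (cls G y) \<longleftrightarrow> cls G y \<in> orb (tau G g) (cls G x)"
      by (rule orb_eq_iff[OF tp])
    also have "\<dots> \<longleftrightarrow> (\<exists>i. cls G y = cls G ((g ^^ i) x))"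
      unfolding orb_def tau_pow[OF assms] by auto
    also have "\<dots> \<longleftrightarrow> (\<exists>i. relg G ((g ^^ i) x) y)"
      using cls_eq_iff[OF G] by metis
    also have "\<dots> \<longleftrightarrow> relg (insert g G) x y"
      unfolding relg_def pg
    proof
      assume "\<exists>i. \<exists>h\<in>perm_gen G. h ((g ^^ i) x) = y"
      then obtain i h where hh: "h \<in> perm_gen G" "h ((g ^^ i) x) = y" by blast
      have "(h \<circ> (g ^^ i)) x = y" using hh(2) by simp
      thus "\<exists>h\<in>{k \<circ> (g ^^ i) | k i. k \<in> perm_gen G}. h x = y" using hh(1) by blast
    next
      assume "\<exists>h\<in>{k \<circ> (g ^^ i) | k i. k \<in> perm_gen G}. h x = y"
      then obtain k i where kk: "k \<in> perm_gen G" "(k \<circ> (g ^^ i)) x = y" by blast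
      thus "\<exists>i. \<exists>h\<in>perm_gen G. h ((g ^^ i) x) = y" by auto
    qed
    also have "\<dots> \<longleftrightarrow> cls (insert g G) x = cls (insert g G) y"
      using cls_eq_iff[OF G'] by metis
    finally show ?thesis .
  qed
  have "orb (tau G g) ` orbs G = range (\<lambda>x. orb (tau G g) (cls G x))"
    unfolding orbs_def by (simp add: image_image)
  moreover have "orbs (insert g G) = range (cls (insert g G))" unfolding orbs_def ..
  ultimately show ?thesis using card_range_eq[of "\<lambda>x. orb (tau G g) (cls G x)" "cls (insert g G)"] key
    by simp
qed

lemma parity_insert:
  fixes G :: "('a::finite \<Rightarrow> 'a) set"
  assumes G: "\<forall>h\<in>G. bij h" and g: "bij g" and c: "\<forall>h\<in>G. g \<circ> h = h \<circ> g"
  shows "evenperm (tau G g) \<longleftrightarrow> even (card (orbs G) + card (orbs (insert g G)))"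
  using sign_cycles[OF tau_permutes[OF assms] finite_orbs] orbs_insert_card[OF assms] by simp

lemma tau_sq:
  assumes G: "\<forall>h\<in>G. bij h" and g: "bij g" and c: "\<forall>h\<in>G. g \<circ> h = h \<circ> g"
  shows "tau G (g \<circ> g) = tau G g \<circ> tau G g"
proof
  fix X show "tau G (g \<circ> g) X = (tau G g \<circ> tau G g) X"
  proof (cases "X \<in> orbs G")
    case True
    then obtain x where x: "X = cls G x" unfolding orbs_def by blast
    have "g ` X \<in> orbs G" unfolding x cls_image[OF assms] by (rule cls_in_orbs)
    thus ?thesis using True unfolding tau_def by (simp add: image_comp)
  next
    case False thus ?thesis unfolding tau_def by simp
  qed
qed

lemma parity_insert_sq:
  fixes G :: "('a::finite \<Rightarrow> 'a) set"
  assumes G: "\<forall>h\<in>G. bij h" and g: "bij g" and c: "\<forall>h\<in>G. g \<circ> h = h \<circ> g"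
  shows "even (card (orbs G) + card (orbs (insert (g \<circ> g) G)))"
proof -
  have g2: "bij (g \<circ> g)" using g bij_comp by blast
  have c2: "\<forall>h\<in>G. (g \<circ> g) \<circ> h = h \<circ> (g \<circ> g)" using c by (metis comp_assoc)
  have tp: "permutation (tau G g)"
    using permutes_imp_permutation[OF finite_orbs tau_permutes[OF assms]] .
  have "evenperm (tau G (g \<circ> g))" unfolding tau_sq[OF assms] evenperm_comp[OF tp tp] by simp
  thus ?thesis using parity_insert[OF G g2 c2] by simp
qed

lemma perm_gen_empty: "perm_gen {} = {id}"
proof
  show "perm_gen {} \<subseteq> {id}"
  proof
    fix h assume "h \<in> perm_gen {}"
    thus "h \<in> {id}" by (induct rule: perm_gen.induct) auto
  qed
  show "{id} \<subseteq> perm_gen {}" using perm_gen.gen_id by blast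
qed

lemma cls_empty: "cls {} x = {x}"
  unfolding cls_def relg_def perm_gen_empty by auto

lemma card_orbs_empty: "card (orbs ({} :: ('a::finite \<Rightarrow> 'a) set)) = CARD('a)"
proof -
  have "orbs ({} :: ('a \<Rightarrow> 'a) set) = (\<lambda>x. {x}) ` UNIV" unfolding orbs_def cls_empty by simp
  moreover have "inj (\<lambda>x::'a. {x})" by (simp add: inj_on_def)
  ultimately show ?thesis by (simp add: card_image)
qed

lemma parity_single:
  fixes w :: "'a::finite \<Rightarrow> 'a"
  assumes "bij w"
  shows "evenperm w \<longleftrightarrow> even (CARD('a) + card (orbs {w}))"
proof -
  have e: "evenperm (tau {} w) \<longleftrightarrow> even (card (orbs ({} :: ('a \<Rightarrow> 'a) set)) + card (orbs (insert w {})))"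
    by (rule parity_insert) (use assms in auto)
  have inj: "inj_on (\<lambda>x::'a. {x}) UNIV" by (simp add: inj_on_def)
  have wp: "w permutes UNIV" using assms by (intro bij_imp_permutes) auto
  have "tau {} w = map_permutation UNIV (\<lambda>x. {x}) w"
    unfolding tau_def map_permutation_def
  proof (rule restrict_id_cong)
    show "orbs {} = (\<lambda>x::'a. {x}) ` UNIV" unfolding orbs_def cls_empty by simp
    fix X assume "X \<in> orbs ({} :: ('a \<Rightarrow> 'a) set)"
    then obtain x where x: "X = {x}" unfolding orbs_def cls_empty by blast
    have "inv_into UNIV (\<lambda>x. {x}) {x} = x" using inv_into_f_f[OF inj] by simp
    thus "w ` X = ((\<lambda>x. {x}) \<circ> w \<circ> inv_into UNIV (\<lambda>x. {x})) X" unfolding x by simp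
  qed
  hence "evenperm (tau {} w) \<longleftrightarrow> evenperm w"
    using evenperm_map_permutation[OF inj wp] by simp
  thus ?thesis using e card_orbs_empty[where 'a='a] by simp
qed

lemma subgroup_perm_gen: "is_subgroup H T \<Longrightarrow> perm_gen H = H"
proof
  assume H: "is_subgroup H T"
  show "perm_gen H \<subseteq> H"
  proof
    fix h assume "h \<in> perm_gen H"
    thus "h \<in> H" using H unfolding is_subgroup_def by (induct rule: perm_gen.induct) auto
  qed
  show "H \<subseteq> perm_gen H" using perm_gen.gen_base by blast
qed

lemma perm_gen_pow:
  assumes "g \<in> perm_gen S" shows "g ^^ n \<in> perm_gen S"
proof (induct n)
  case 0 thus ?case using perm_gen.gen_id by (simp only: funpow.simps(1))
next
  case (Suc n)
  from perm_gen.gen_comp[OF assms Suc] show ?case by (simp only: funpow.simps(2))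
qed

lemma uv_pow:
  assumes "u \<circ> v = v \<circ> u"
  shows "((v ^^ a) \<circ> (u ^^ b)) \<circ> ((v ^^ c) \<circ> (u ^^ d)) = (v ^^ (a + c)) \<circ> (u ^^ (b + d))"
proof -
  have "(u ^^ b) \<circ> v = v \<circ> (u ^^ b)" by (rule funpow_commute[OF assms])
  hence "v \<circ> (u ^^ b) = (u ^^ b) \<circ> v" by simp
  hence c: "(v ^^ c) \<circ> (u ^^ b) = (u ^^ b) \<circ> (v ^^ c)" by (rule funpow_commute)
  have "((v ^^ a) \<circ> (u ^^ b)) \<circ> ((v ^^ c) \<circ> (u ^^ d)) = (v ^^ a) \<circ> ((u ^^ b) \<circ> (v ^^ c)) \<circ> (u ^^ d)"
    by (simp only: comp_assoc)
  also have "\<dots> = (v ^^ a) \<circ> (v ^^ c) \<circ> ((u ^^ b) \<circ> (u ^^ d))" by (simp only: c[symmetric] comp_assoc)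
  also have "\<dots> = (v ^^ (a + c)) \<circ> (u ^^ (b + d))" by (simp only: funpow_add)
  finally show ?thesis .
qed

lemma parity_sq_set:
  fixes T :: "('a::finite \<Rightarrow> 'a) set"
  assumes Tb: "\<forall>t\<in>T. bij t" and Tc: "\<forall>a\<in>T. \<forall>b\<in>T. a \<circ> b = b \<circ> a"
    and Tsq: "\<forall>t\<in>T. t \<circ> t \<in> T" and GT: "G \<subseteq> T"
  shows "finite F \<Longrightarrow> F \<subseteq> {t \<circ> t | t. t \<in> T} \<Longrightarrow> even (card (orbs G) + card (orbs (G \<union> F)))"
proof (induct F rule: finite_induct)
  case empty thus ?case by simp
next
  case (insert s F)
  have sF: "s \<in> {t \<circ> t | t. t \<in> T}" "F \<subseteq> {t \<circ> t | t. t \<in> T}" using insert_subset[THEN iffD1, OF insert.prems(1)] by (simp_all only:)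
  then obtain t where t: "t \<in> T" "s = t \<circ> t" by blast
  have IH: "even (card (orbs G) + card (orbs (G \<union> F)))" using insert.hyps(3)[OF sF(2)] .
  have "F \<subseteq> T" using sF(2) Tsq by blast
  hence GF: "G \<union> F \<subseteq> T" using GT by simp
  have "even (card (orbs (G \<union> F)) + card (orbs (insert (t \<circ> t) (G \<union> F))))"
    by (rule parity_insert_sq) (use GF Tb Tc t in blast)+
  moreover have "insert (t \<circ> t) (G \<union> F) = G \<union> insert s F" using t by blast
  ultimately show ?case using IH by simp
qed

theorem parity_all_subgroups:
  fixes u v :: "'a::finite \<Rightarrow> 'a"
  assumes bu: "bij u" and bv: "bij v" and uv: "u \<circ> v = v \<circ> u"
    and eu: "evenperm u" and ev: "evenperm v"
    and eT: "even (CARD('a) + card (orbs {u, v}))"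
    and H: "is_subgroup H (perm_gen {u, v})"
  shows "even (CARD('a) + card (orbs H))"
proof -
  define T where "T = perm_gen {u, v}"
  have gb: "\<forall>g\<in>{u, v}. bij g" using bu bv by blast
  have Tb: "\<forall>t\<in>T. bij t" unfolding T_def using perm_gen_bij[OF gb] by blast
  have cu: "u \<circ> k = k \<circ> u" if "k \<in> T" for k
    using perm_gen_commute[OF gb bu _ that[unfolded T_def]] uv by auto
  have cv: "v \<circ> k = k \<circ> v" if "k \<in> T" for k
    using perm_gen_commute[OF gb bv _ that[unfolded T_def]] uv by auto
  have Tc: "\<forall>a\<in>T. \<forall>b\<in>T. a \<circ> b = b \<circ> a"
  proof (intro ballI)
    fix a b assume a: "a \<in> T" and b: "b \<in> T"
    have "\<forall>h\<in>{u, v}. a \<circ> h = h \<circ> a" using cu[OF a] cv[OF a] by auto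
    from perm_gen_commute[OF gb _ this b[unfolded T_def]] Tb a show "a \<circ> b = b \<circ> a" by blast
  qed
  have uT: "u \<in> T" and vT: "v \<in> T" unfolding T_def by (auto intro: perm_gen.gen_base)
  \<comment> \<open>representation of elements\<close>
  have Trep: "\<exists>i j. t = (v ^^ j) \<circ> (u ^^ i)" if "t \<in> T" for t
  proof -
    have pv: "perm_gen (insert v {}) = {k \<circ> (v ^^ i) | k i. k \<in> perm_gen {}}"
      by (rule perm_gen_insert) (use bv in auto)
    have pu: "perm_gen (insert u {v}) = {k \<circ> (u ^^ i) | k i. k \<in> perm_gen {v}}"
      by (rule perm_gen_insert) (use bu bv uv in auto)
    from that obtain k i where k: "k \<in> perm_gen {v}" "t = k \<circ> (u ^^ i)"
      unfolding T_def using pu by auto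
    have "k \<in> perm_gen (insert v {})" using k(1) by simp
    hence "\<exists>ka j. ka \<in> perm_gen {} \<and> k = ka \<circ> (v ^^ j)" unfolding pv by blast
    then obtain ka j where kj: "ka \<in> perm_gen {}" "k = ka \<circ> (v ^^ j)" by blast
    hence "k = v ^^ j" by (simp add: perm_gen_empty)
    with k show ?thesis by blast
  qed
  define Sq where "Sq = {t \<circ> t | t. t \<in> T}"
  have SqT: "Sq \<subseteq> T" unfolding Sq_def T_def using perm_gen.gen_comp by blast
  have finSq: "finite Sq" by (rule finite_subset[OF subset_UNIV]) simp
  have key: "even (card (orbs G) + card (orbs (G \<union> Sq)))" if "G \<subseteq> T" for G
    using parity_sq_set[OF Tb Tc _ that finSq] SqT unfolding Sq_def by blast
  have HT: "H \<subseteq> T" using H unfolding is_subgroup_def T_def by blast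
  have pH: "perm_gen H = H" by (rule subgroup_perm_gen[OF H])
  define Y where "Y = {r \<in> {u, v, u \<circ> v}. \<exists>h\<in>H. \<exists>s\<in>T. h = r \<circ> (s \<circ> s)}"
  have uvT: "u \<circ> v \<in> T" using perm_gen.gen_comp[of u "{u, v}" v] uT vT unfolding T_def by blast
  have YT: "Y \<subseteq> T" unfolding Y_def using uT vT uvT by blast
  have decomp: "\<exists>r\<in>{id, u, v, u \<circ> v}. \<exists>s\<in>T. h = r \<circ> (s \<circ> s)" if hT: "h \<in> T" for h
  proof -
    obtain i j where h: "h = (v ^^ j) \<circ> (u ^^ i)" using Trep[OF hT] by blast
    define r where "r = (v ^^ (j mod 2)) \<circ> (u ^^ (i mod 2))"
    define s where "s = (v ^^ (j div 2)) \<circ> (u ^^ (i div 2))"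
    have sT: "s \<in> T"
    proof -
      have "v ^^ n \<in> T" for n using perm_gen_pow vT unfolding T_def by blast
      moreover have "u ^^ n \<in> T" for n using perm_gen_pow uT unfolding T_def by blast
      ultimately show ?thesis unfolding s_def T_def using perm_gen.gen_comp by blast
    qed
    have "r \<circ> (s \<circ> s) = (v ^^ (j mod 2 + (j div 2 + j div 2))) \<circ> (u ^^ (i mod 2 + (i div 2 + i div 2)))"
      unfolding r_def s_def uv_pow[OF uv] ..
    also have "\<dots> = h" unfolding h by (metis mod_div_mult_eq mult_2_right add.commute)
    finally have hr: "h = r \<circ> (s \<circ> s)" ..
    have "j mod 2 = 0 \<or> j mod 2 = 1" "i mod 2 = 0 \<or> i mod 2 = 1" by auto
    hence "r \<in> {id, u, v, u \<circ> v}" unfolding r_def using uv by auto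
    with hr sT show ?thesis by blast
  qed
  have pHY: "perm_gen (H \<union> Sq) = perm_gen (Y \<union> Sq)"
  proof (rule perm_gen_eqI)
    show "H \<union> Sq \<subseteq> perm_gen (Y \<union> Sq)"
    proof
      fix h assume "h \<in> H \<union> Sq"
      show "h \<in> perm_gen (Y \<union> Sq)"
      proof (cases "h \<in> H")
        case True
        then obtain r s where rs: "r \<in> {id, u, v, u \<circ> v}" "s \<in> T" "h = r \<circ> (s \<circ> s)"
          using decomp HT by blast
        have ss: "s \<circ> s \<in> perm_gen (Y \<union> Sq)" using rs(2) unfolding Sq_def by (blast intro: perm_gen.gen_base)
        show ?thesis
        proof (cases "r = id")
          case True thus ?thesis using rs ss by simp
        next
          case False
          hence "r \<in> Y" unfolding Y_def using rs True by blast
          hence "r \<in> perm_gen (Y \<union> Sq)" by (blast intro: perm_gen.gen_base)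
          thus ?thesis using rs(3) perm_gen.gen_comp[OF _ ss] by blast
        qed
      next
        case False thus ?thesis using \<open>h \<in> H \<union> Sq\<close> by (blast intro: perm_gen.gen_base)
      qed
    qed
    show "Y \<union> Sq \<subseteq> perm_gen (H \<union> Sq)"
    proof
      fix r assume "r \<in> Y \<union> Sq"
      show "r \<in> perm_gen (H \<union> Sq)"
      proof (cases "r \<in> Y")
        case True
        then obtain h s where hs: "h \<in> H" "s \<in> T" "h = r \<circ> (s \<circ> s)" unfolding Y_def by blast
        have bs: "bij (s \<circ> s)" using Tb hs(2) bij_comp by blast
        have "h \<circ> inv_into UNIV (s \<circ> s) = r \<circ> ((s \<circ> s) \<circ> inv_into UNIV (s \<circ> s))" unfolding hs(3) by (simp add: comp_assoc)
        also have "\<dots> = r" using surj_iff[THEN iffD1, OF bij_is_surj[OF bs]] by simp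
        finally have r: "r = h \<circ> inv_into UNIV (s \<circ> s)" ..
        have "s \<circ> s \<in> perm_gen (H \<union> Sq)" using hs(2) unfolding Sq_def by (blast intro: perm_gen.gen_base)
        moreover have "h \<in> perm_gen (H \<union> Sq)" using hs(1) by (blast intro: perm_gen.gen_base)
        ultimately show ?thesis unfolding r by (blast intro: perm_gen.gen_comp perm_gen.gen_inv)
      next
        case False thus ?thesis using \<open>r \<in> Y \<union> Sq\<close> by (blast intro: perm_gen.gen_base)
      qed
    qed
  qed
  \<comment> \<open>reduce Y to a standard set Z\<close>
  obtain Z where ZT: "Z \<subseteq> T" and pZ: "perm_gen (Y \<union> Sq) = perm_gen (Z \<union> Sq)"
    and eZ: "even (CARD('a) + card (orbs Z))"
  proof (cases "(u \<in> Y \<and> v \<in> Y) \<or> (u \<in> Y \<and> u \<circ> v \<in> Y) \<or> (v \<in> Y \<and> u \<circ> v \<in> Y)")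
    case True
    have bu': "bij (inv_into UNIV u)" and bv': "bij (inv_into UNIV v)" using bu bv bij_imp_bij_inv by blast+
    have uid: "inv_into UNIV u \<circ> (u \<circ> v) = v" using bu by (simp add: comp_assoc[symmetric] inj_iff[THEN iffD1] bij_is_inj)
    have vid: "(u \<circ> v) \<circ> inv_into UNIV v = u" using bv by (simp add: comp_assoc surj_iff[THEN iffD1] bij_is_surj)
    have "perm_gen (Y \<union> Sq) = perm_gen ({u, v} \<union> Sq)"
    proof (rule perm_gen_eqI)
      show "Y \<union> Sq \<subseteq> perm_gen ({u, v} \<union> Sq)"
      proof
        fix r assume r: "r \<in> Y \<union> Sq"
        have uu: "u \<in> perm_gen ({u, v} \<union> Sq)" "v \<in> perm_gen ({u, v} \<union> Sq)"
          by (auto intro: perm_gen.gen_base)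
        show "r \<in> perm_gen ({u, v} \<union> Sq)"
          using r uu perm_gen.gen_comp[OF uu] unfolding Y_def by (blast intro: perm_gen.gen_base)
      qed
      show "{u, v} \<union> Sq \<subseteq> perm_gen (Y \<union> Sq)"
      proof -
        have inY: "x \<in> perm_gen (Y \<union> Sq)" if "x \<in> Y" for x using that by (blast intro: perm_gen.gen_base)
        have "u \<in> perm_gen (Y \<union> Sq) \<and> v \<in> perm_gen (Y \<union> Sq)"
          using True
        proof (elim disjE conjE)
          assume "u \<in> Y" "v \<in> Y" thus ?thesis using inY by blast
        next
          assume a: "u \<in> Y" "u \<circ> v \<in> Y"
          have "inv_into UNIV u \<circ> (u \<circ> v) \<in> perm_gen (Y \<union> Sq)"
            using inY[OF a(1)] inY[OF a(2)] by (blast intro: perm_gen.gen_comp perm_gen.gen_inv)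
          thus ?thesis unfolding uid using inY[OF a(1)] by blast
        next
          assume a: "v \<in> Y" "u \<circ> v \<in> Y"
          have "(u \<circ> v) \<circ> inv_into UNIV v \<in> perm_gen (Y \<union> Sq)"
            using inY[OF a(1)] inY[OF a(2)] by (blast intro: perm_gen.gen_comp perm_gen.gen_inv)
          thus ?thesis unfolding vid using inY[OF a(1)] by blast
        qed
        thus ?thesis by (blast intro: perm_gen.gen_base)
      qed
    qed
    thus ?thesis using that[of "{u, v}"] uT vT eT by auto
  next
    case False
    have Ysub: "Y \<subseteq> {u, v, u \<circ> v}" unfolding Y_def by blast
    have evw: "even (CARD('a) + card (orbs {w}))" if "w \<in> {u, v, u \<circ> v}" for w
    proof -
      have pu: "permutation u" and pv: "permutation v"
        using bu bv by (auto intro!: permutes_imp_permutation[of UNIV] bij_imp_permutes)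
      have "evenperm w" using that eu ev evenperm_comp[OF pu pv] by auto
      moreover have "bij w" using that bu bv bij_comp by blast
      ultimately show ?thesis using parity_single by blast
    qed
    have "Y = {} \<or> (\<exists>w\<in>{u, v, u \<circ> v}. Y = {w})" using False Ysub by blast
    thus ?thesis
    proof
      assume "Y = {}" thus ?thesis using that[of "{}"] card_orbs_empty[where 'a='a] by simp
    next
      assume "\<exists>w\<in>{u, v, u \<circ> v}. Y = {w}"
      then obtain w where "w \<in> {u, v, u \<circ> v}" "Y = {w}" by blast
      thus ?thesis using that[of "{w}"] evw YT by auto
    qed
  qed
  have "even (card (orbs H) + card (orbs (H \<union> Sq)))" by (rule key[OF HT])
  moreover have "orbs (H \<union> Sq) = orbs (Z \<union> Sq)" using orbs_cong pHY pZ by metis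
  moreover have "even (card (orbs Z) + card (orbs (Z \<union> Sq)))" by (rule key[OF ZT])
  ultimately have e1: "even (card (orbs H) + card (orbs (Z \<union> Sq)))"
    and e2: "even (card (orbs Z) + card (orbs (Z \<union> Sq)))" by simp_all
  have ar: "even ((a::nat) + b) \<Longrightarrow> even (c + b) \<Longrightarrow> even (n + c) \<Longrightarrow> even (n + a)" for a b c n
    by presburger
  show ?thesis by (rule ar[OF e1 e2 eZ])
qed


definition mk :: "nat \<Rightarrow> (nat \<Rightarrow> nat \<Rightarrow> 'a) \<Rightarrow> 'a Matrix.mat" where
  "mk k B = Matrix.mat k k (\<lambda>(i, j). B i j)"

lemma mk_carrier[simp]: "mk k B \<in> carrier_mat k k"
  unfolding mk_def by simp

lemma mk_dims[simp]: "dim_row (mk k B) = k" "dim_col (mk k B) = k"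
  unfolding mk_def by simp_all

lemma mk_index[simp]: "i < k \<Longrightarrow> j < k \<Longrightarrow> mk k B $$ (i, j) = B i j"
  unfolding mk_def by simp

lemma det_fn_jnf: "det_fn k B = Determinant.det (mk k B)"
proof -
  have "Determinant.det (mk k B) = (\<Sum>p\<in>{p. p permutes {0..<k}}. of_int (sign p) * (\<Prod>i = 0..<k. mk k B $$ (i, p i)))"
    unfolding Determinant.det_def mk_def by simp
  also have "\<dots> = (\<Sum>p | p permutes {..<k}. of_int (sign p) * (\<Prod>i<k. B i (p i)))"
  proof (rule sum.cong)
    show "{p. p permutes {0..<k}} = {p. p permutes {..<k}}" by (simp add: lessThan_atLeast0)
    fix p assume "p \<in> {p. p permutes {..<k}}"
    hence p: "p permutes {..<k}" by simp
    have "(\<Prod>i = 0..<k. mk k B $$ (i, p i)) = (\<Prod>i<k. B i (p i))"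
      unfolding lessThan_atLeast0[symmetric]
      by (rule prod.cong) (use p permutes_in_image[OF p] in auto)
    thus "of_int (sign p) * (\<Prod>i = 0..<k. mk k B $$ (i, p i)) = of_int (sign p) * (\<Prod>i<k. B i (p i))" by simp
  qed
  finally show ?thesis unfolding det_fn_def by simp
qed

lemma mk_mult: "mk k P * mk k Q = mk k (\<lambda>i j. \<Sum>l<k. P i l * Q l j)"
  by (rule eq_matI) (auto simp: mk_def scalar_prod_def lessThan_atLeast0)

lemma mk_one: "(\<And>i j. i < k \<Longrightarrow> j < k \<Longrightarrow> P i j = (if i = j then 1 else 0)) \<Longrightarrow> mk k P = 1\<^sub>m k"
  by (rule eq_matI) (auto simp: mk_def)

lemma mk_eq: "(\<And>i j. i < k \<Longrightarrow> j < k \<Longrightarrow> P i j = Q i j) \<Longrightarrow> mk k P = mk k Q"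
  by (rule eq_matI) (auto simp: mk_def)

section \<open>Linear combinations\<close>

lemma mv_scale: "A *v (c *s x) = c *s (A *v (x :: 'a::comm_ring_1 ^ 'n))"
  by (simp add: Finite_Cartesian_Product.vec_eq_iff matrix_vector_mult_def sum_distrib_left mult.left_commute)

lemma mv_sum: "A *v (\<Sum>i\<in>I. f i) = (\<Sum>i\<in>I. A *v (f i :: 'a::comm_ring_1 ^ 'n))"
  by (simp add: Finite_Cartesian_Product.vec_eq_iff matrix_vector_mult_def sum_distrib_left) (intro allI sum.swap)

lemma lc_delta:
  assumes "j < (k::nat)" shows "(\<Sum>l<k. (if l = j then 1 else 0) *s (b l :: complex ^ 'n)) = b j"
proof -
  have "(\<Sum>l<k. (if l = j then 1 else 0) *s b l) = (\<Sum>l<k. if l = j then b l else 0)"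
    by (rule sum.cong) auto
  also have "\<dots> = (if j \<in> {..<k} then b j else 0)" by (rule sum.delta) simp
  also have "\<dots> = b j" using assms by simp
  finally show ?thesis .
qed

lemma lc_compose:
  "(\<Sum>i<(k::nat). c i *s (\<Sum>l<k. P l i *s (b l :: complex ^ 'n))) = (\<Sum>l<k. (\<Sum>i<k. P l i * c i) *s b l)"
proof -
  have "(\<Sum>i<k. c i *s (\<Sum>l<k. P l i *s b l)) = (\<Sum>i<k. \<Sum>l<k. (P l i * c i) *s b l)"
    by (rule sum.cong) (auto simp: vec.scale_sum_right vector_smult_assoc mult.commute)
  also have "\<dots> = (\<Sum>l<k. \<Sum>i<k. (P l i * c i) *s b l)" by (rule sum.swap)
  also have "\<dots> = (\<Sum>l<k. (\<Sum>i<k. P l i * c i) *s b l)"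
    by (rule sum.cong) (auto simp: vec.scale_sum_left)
  finally show ?thesis .
qed

lemma cbasis_in:
  assumes "is_cbasis S k b" "i < k" shows "b i \<in> S"
proof -
  have "b i \<in> vec.span (b ` {..<k})" using assms(2) by (intro vec.span_base) auto
  thus ?thesis using assms(1) unfolding is_cbasis_def by simp
qed

lemma cbasis_unique:
  assumes "is_cbasis S k b" "(\<Sum>i<k. c i *s b i) = (\<Sum>i<k. d i *s b i)" "i < k"
  shows "c i = d i"
proof -
  let ?X = "b ` {..<k}"
  have inj: "inj_on b {..<k}" and ind: "vec.independent ?X" using assms(1) unfolding is_cbasis_def by auto
  define u where "u = (\<lambda>x. c (the_inv_into {..<k} b x) - d (the_inv_into {..<k} b x))"
  have "(\<Sum>x\<in>?X. u x *s x) = (\<Sum>i<k. u (b i) *s b i)" by (rule sum.reindex[OF inj, unfolded o_def])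
  also have "\<dots> = (\<Sum>i<k. (c i - d i) *s b i)"
    by (rule sum.cong) (auto simp: u_def the_inv_into_f_f[OF inj])
  also have "\<dots> = (\<Sum>i<k. c i *s b i) - (\<Sum>i<k. d i *s b i)"
    by (simp add: vector_sub_rdistrib sum_subtractf)
  also have "\<dots> = 0" using assms(2) by simp
  finally have "(\<Sum>x\<in>?X. u x *s x) = 0" .
  hence "\<forall>x\<in>?X. u x = 0" using ind vec.dependent_finite[of ?X] by auto
  hence "u (b i) = 0" using assms(3) by auto
  thus ?thesis unfolding u_def using the_inv_into_f_f[OF inj] assms(3) by simp
qed

lemma cbasis_coords:
  assumes "is_cbasis S k b" "x \<in> S"
  shows "\<exists>c. x = (\<Sum>i<k. c i *s b i)"
proof -
  let ?X = "b ` {..<k}"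
  have inj: "inj_on b {..<k}" and sp: "vec.span ?X = S" using assms(1) unfolding is_cbasis_def by auto
  have "x \<in> vec.span ?X" using sp assms(2) by simp
  then obtain u where u: "x = (\<Sum>v\<in>?X. u v *s v)" using vec.span_finite[of ?X] by auto
  also have "\<dots> = (\<Sum>i<k. u (b i) *s b i)" by (rule sum.reindex[OF inj, unfolded o_def])
  finally show ?thesis by (intro exI[of _ "\<lambda>i. u (b i)"])
qed

lemma cbasis_dim:
  assumes "is_cbasis S k b" shows "vec.dim S = k"
proof -
  have i: "inj_on b {..<k}" "vec.independent (b ` {..<k})" "vec.span (b ` {..<k}) = S"
    using assms unfolding is_cbasis_def by auto
  have "vec.dim S = vec.dim (vec.span (b ` {..<k}))" using i(3) by simp
  also have "\<dots> = card (b ` {..<k})" by (rule vec.dim_span_eq_card_independent[OF i(2)])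
  also have "\<dots> = k" using card_image[OF i(1)] by simp
  finally show ?thesis .
qed

definition rep_ok :: "complex^'n^'n \<Rightarrow> (complex^'n) set \<Rightarrow> nat \<Rightarrow> (nat \<Rightarrow> complex^'n) \<Rightarrow> (nat \<Rightarrow> nat \<Rightarrow> complex) \<Rightarrow> bool" where
  "rep_ok A S k b B \<longleftrightarrow> is_cbasis S k b \<and> (\<forall>j<k. A *v b j = (\<Sum>i<k. B i j *s b i))"

lemma coords_fun:
  assumes "is_cbasis S k b" "\<And>j. j < k' \<Longrightarrow> f j \<in> S"
  shows "\<exists>P. \<forall>j<k'. f j = (\<Sum>i<k. P i j *s b i)"
proof -
  have "\<forall>j. \<exists>c. j < k' \<longrightarrow> f j = (\<Sum>i<k. c i *s b i)"
    using cbasis_coords[OF assms(1) assms(2)] by blast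
  then obtain C where C: "\<forall>j. j < k' \<longrightarrow> f j = (\<Sum>i<k. C j i *s b i)" by (metis choice)
  show ?thesis by (rule exI[of _ "\<lambda>i j. C j i"]) (use C in auto)
qed

lemma change_of_basis:
  assumes b: "is_cbasis S k b" and b': "is_cbasis S k b'"
    and P: "\<forall>j<k. b' j = (\<Sum>i<k. P i j *s b i)" and Q: "\<forall>j<k. b j = (\<Sum>i<k. Q i j *s b' i)"
  shows "mk k P * mk k Q = 1\<^sub>m k"
proof -
  have "(\<Sum>i<k. P l i * Q i j) = (if l = j then 1 else 0)" if l: "l < k" and j: "j < k" for l j
  proof -
    have "(\<Sum>l<k. (\<Sum>i<k. P l i * Q i j) *s b l) = (\<Sum>i<k. Q i j *s (\<Sum>l<k. P l i *s b l))"
      by (rule lc_compose[symmetric])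
    also have "\<dots> = (\<Sum>i<k. Q i j *s b' i)" using P by (intro sum.cong) auto
    also have "\<dots> = b j" using Q j by simp
    also have "\<dots> = (\<Sum>l<k. (if l = j then 1 else 0) *s b l)" using lc_delta[OF j, of b] by simp
    finally show ?thesis by (rule cbasis_unique[OF b _ l])
  qed
  thus ?thesis unfolding mk_mult by (intro mk_one) auto
qed

lemma det_invariant:
  assumes r1: "rep_ok A S k b B" and r2: "rep_ok A S k' b' B'"
  shows "det_fn k B = det_fn k' B'"
proof -
  have b: "is_cbasis S k b" and b'0: "is_cbasis S k' b'" using r1 r2 unfolding rep_ok_def by auto
  have kk: "k' = k" using cbasis_dim[OF b] cbasis_dim[OF b'0] by simp
  have b': "is_cbasis S k b'" using b'0 kk by simp
  have AB: "\<forall>j<k. A *v b j = (\<Sum>i<k. B i j *s b i)" using r1 unfolding rep_ok_def by auto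
  have AB': "\<forall>j<k. A *v b' j = (\<Sum>i<k. B' i j *s b' i)" using r2 kk unfolding rep_ok_def by auto
  obtain P where P: "\<forall>j<k. b' j = (\<Sum>i<k. P i j *s b i)"
    using coords_fun[OF b, of k b'] cbasis_in[OF b'] by blast
  obtain Q where Q: "\<forall>j<k. b j = (\<Sum>i<k. Q i j *s b' i)"
    using coords_fun[OF b', of k b] cbasis_in[OF b] by blast
  have PQ: "mk k P * mk k Q = 1\<^sub>m k" by (rule change_of_basis[OF b b' P Q])
  have QP: "mk k Q * mk k P = 1\<^sub>m k" by (rule change_of_basis[OF b' b Q P])
  have BP: "mk k B * mk k P = mk k P * mk k B'"
  proof -
    have "(\<Sum>i<k. B l i * P i j) = (\<Sum>m<k. P l m * B' m j)" if l: "l < k" and j: "j < k" for l j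
    proof -
      have "(\<Sum>l<k. (\<Sum>i<k. B l i * P i j) *s b l) = (\<Sum>i<k. P i j *s (\<Sum>l<k. B l i *s b l))"
        by (rule lc_compose[symmetric])
      also have "\<dots> = (\<Sum>i<k. P i j *s (A *v b i))" using AB by (intro sum.cong) auto
      also have "\<dots> = A *v b' j" using P j by (simp add: mv_sum mv_scale)
      also have "\<dots> = (\<Sum>m<k. B' m j *s b' m)" using AB' j by simp
      also have "\<dots> = (\<Sum>m<k. B' m j *s (\<Sum>l<k. P l m *s b l))" using P by (intro sum.cong) auto
      also have "\<dots> = (\<Sum>l<k. (\<Sum>m<k. P l m * B' m j) *s b l)" by (rule lc_compose)
      finally show ?thesis by (rule cbasis_unique[OF b _ l])
    qed
    thus ?thesis unfolding mk_mult by (intro mk_eq) auto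
  qed
  have "mk k B' = (mk k Q * mk k P) * mk k B'" using QP by simp
  also have "\<dots> = mk k Q * (mk k P * mk k B')" by (rule assoc_mult_mat) auto
  also have "\<dots> = mk k Q * (mk k B * mk k P)" using BP by simp
  also have "\<dots> = mk k Q * mk k B * mk k P" by (rule assoc_mult_mat[symmetric]) auto
  finally have sim: "mk k B' = mk k Q * mk k B * mk k P" .
  have "similar_mat (mk k B') (mk k B)"
    by (rule similar_matI[OF _ QP PQ sim]) auto
  hence "Determinant.det (mk k B') = Determinant.det (mk k B)" by (rule det_similar)
  thus ?thesis using kk by (simp add: det_fn_jnf)
qed

lemma det_on_eq:
  assumes "rep_ok A S k b B" shows "det_on A S = det_fn k B"
proof -
  have ex: "\<exists>k b B. is_cbasis S k b \<and> (\<forall>j<k. A *v b j = (\<Sum>i<k. B i j *s b i)) \<and> det_fn k B = det_fn k B"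
    using assms unfolding rep_ok_def by blast
  have "\<exists>k' b' B'. is_cbasis S k' b' \<and> (\<forall>j<k'. A *v b' j = (\<Sum>i<k'. B' i j *s b' i)) \<and> det_on A S = det_fn k' B'"
    unfolding det_on_def by (rule someI_ex) (use ex in blast)
  then obtain k' b' B' where "rep_ok A S k' b' B'" "det_on A S = det_fn k' B'" unfolding rep_ok_def by blast
  thus ?thesis using det_invariant[OF assms] by simp
qed

lemma cbasis_intro:
  fixes b :: "nat \<Rightarrow> complex ^ 'n"
  assumes ind: "\<And>c. (\<Sum>i<k. c i *s b i) = 0 \<Longrightarrow> (\<forall>i<k. c i = 0)"
    and sp: "vec.span (b ` {..<k}) = S"
  shows "is_cbasis S k b"
proof -
  have inj: "inj_on b {..<k}"
  proof (rule inj_onI, rule ccontr)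
    fix i j assume i: "i \<in> {..<k}" and j: "j \<in> {..<k}" and e: "b i = b j" and ne: "i \<noteq> j"
    define c where "c = (\<lambda>l. (if l = i then 1 else 0) - (if l = j then (1::complex) else 0))"
    have "(\<Sum>l<k. c l *s b l) = (\<Sum>l<k. (if l = i then 1 else 0) *s b l) - (\<Sum>l<k. (if l = j then 1 else 0) *s b l)"
      unfolding c_def by (simp add: vector_sub_rdistrib sum_subtractf)
    also have "\<dots> = b i - b j" using lc_delta[of i k b] lc_delta[of j k b] i j by simp
    also have "\<dots> = 0" using e by simp
    finally have "\<forall>l<k. c l = 0" by (rule ind)
    hence "c i = 0" using i by simp
    thus False unfolding c_def using ne by simp
  qed
  have "\<not> vec.dependent (b ` {..<k})"
  proof
    assume "vec.dependent (b ` {..<k})"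
    then obtain u where u: "\<exists>v\<in>b ` {..<k}. u v \<noteq> 0" "(\<Sum>v\<in>b ` {..<k}. u v *s v) = 0"
      using vec.dependent_finite[of "b ` {..<k}"] by auto
    have "(\<Sum>i<k. u (b i) *s b i) = 0" using u(2) sum.reindex[OF inj, of "\<lambda>v. u v *s v"] by simp
    hence "\<forall>i<k. u (b i) = 0" by (rule ind)
    thus False using u(1) by auto
  qed
  thus ?thesis unfolding is_cbasis_def using inj sp by simp
qed

lemma lc_in_span: "(\<Sum>i<k. c i *s b i) \<in> vec.span (b ` {..<k})"
  by (intro vec.span_sum vec.span_scale vec.span_base) auto

lemma rep_exists:
  assumes S: "vec.subspace S" and inv: "\<forall>x\<in>S. A *v x \<in> S"
  shows "\<exists>k b B. rep_ok A S k b B"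
proof -
  obtain Bs where Bs: "Bs \<subseteq> S" "vec.independent Bs" "S \<subseteq> vec.span Bs"
    using vec.maximal_independent_subset[of S] by blast
  have fin: "finite Bs" using vec.finiteI_independent[OF Bs(2)] .
  have spB: "vec.span Bs = S" by (rule vec.span_subspace[OF Bs(1) Bs(3) S])
  obtain h where h: "bij_betw h {0..<card Bs} Bs" using ex_bij_betw_nat_finite[OF fin] by blast
  define k where "k = card Bs"
  have hk: "bij_betw h {..<k} Bs" using h unfolding k_def by (simp add: lessThan_atLeast0)
  have cb: "is_cbasis S k h"
    unfolding is_cbasis_def using bij_betw_imp_inj_on[OF hk] bij_betw_imp_surj_on[OF hk] Bs(2) spB by simp
  obtain B where B: "\<forall>j<k. A *v h j = (\<Sum>i<k. B i j *s h i)"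
    using coords_fun[OF cb, of k "\<lambda>j. A *v h j"] inv cbasis_in[OF cb] by blast
  show ?thesis unfolding rep_ok_def using cb B by blast
qed

lemma sum_split: "(\<Sum>i<k1+k2. f i) = (\<Sum>i<k1. f i) + (\<Sum>i<k2. f (k1 + i)) "
  for f :: "nat \<Rightarrow> 'a::comm_monoid_add"
  by (induct k2) (simp_all add: add.assoc)

definition catb :: "nat \<Rightarrow> (nat \<Rightarrow> 'a) \<Rightarrow> (nat \<Rightarrow> 'a) \<Rightarrow> nat \<Rightarrow> 'a" where
  "catb k1 b1 b2 = (\<lambda>i. if i < k1 then b1 i else b2 (i - k1))"

definition catB :: "nat \<Rightarrow> (nat \<Rightarrow> nat \<Rightarrow> complex) \<Rightarrow> (nat \<Rightarrow> nat \<Rightarrow> complex) \<Rightarrow> nat \<Rightarrow> nat \<Rightarrow> complex" where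
  "catB k1 B1 B2 = (\<lambda>i j. if i < k1 then (if j < k1 then B1 i j else 0)
      else (if j < k1 then 0 else B2 (i - k1) (j - k1)))"

lemma catb_split:
  "(\<Sum>i<k1+k2. c i *s catb k1 b1 b2 i) = (\<Sum>i<k1. c i *s b1 i) + (\<Sum>i<k2. c (k1 + i) *s b2 i)"
  unfolding sum_split catb_def by simp

lemma det_catB: "det_fn (k1 + k2) (catB k1 B1 B2) = det_fn k1 B1 * det_fn k2 B2"
proof -
  have "mk (k1 + k2) (catB k1 B1 B2) = four_block_mat (mk k1 B1) (0\<^sub>m k1 k2) (0\<^sub>m k2 k1) (mk k2 B2)"
    by (rule eq_matI) (auto simp: catB_def)
  moreover have "Determinant.det (four_block_mat (mk k1 B1) (0\<^sub>m k1 k2) (0\<^sub>m k2 k1) (mk k2 B2))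
      = Determinant.det (mk k1 B1) * Determinant.det (mk k2 B2)"
    by (rule det_four_block_mat_upper_right_zero) auto
  ultimately show ?thesis by (simp add: det_fn_jnf)
qed

lemma rep_block:
  assumes r1: "rep_ok A S1 k1 b1 B1" and r2: "rep_ok A S2 k2 b2 B2"
    and s2: "vec.subspace S2"
    and int: "\<And>x. x \<in> S1 \<Longrightarrow> x \<in> S2 \<Longrightarrow> x = 0"
    and sm: "\<And>x. \<exists>x1\<in>S1. \<exists>x2\<in>S2. x = x1 + x2"
  shows "rep_ok A UNIV (k1 + k2) (catb k1 b1 b2) (catB k1 B1 B2)"
proof -
  have c1: "is_cbasis S1 k1 b1" and c2: "is_cbasis S2 k2 b2" using r1 r2 unfolding rep_ok_def by auto
  have sp1: "vec.span (b1 ` {..<k1}) = S1" and sp2: "vec.span (b2 ` {..<k2}) = S2"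
    using c1 c2 unfolding is_cbasis_def by auto
  have cb: "is_cbasis UNIV (k1 + k2) (catb k1 b1 b2)"
  proof (rule cbasis_intro)
    fix c assume "(\<Sum>i<k1 + k2. c i *s catb k1 b1 b2 i) = 0"
    hence z: "(\<Sum>i<k1. c i *s b1 i) + (\<Sum>i<k2. c (k1 + i) *s b2 i) = 0" unfolding catb_split .
    have x1: "(\<Sum>i<k1. c i *s b1 i) \<in> S1" using lc_in_span[where k=k1 and c=c and b=b1] sp1 by simp
    have x2: "(\<Sum>i<k2. c (k1 + i) *s b2 i) \<in> S2" using lc_in_span[where k=k2 and c="\<lambda>i. c (k1 + i)" and b=b2] sp2 by simp
    have e: "(\<Sum>i<k1. c i *s b1 i) = - (\<Sum>i<k2. c (k1 + i) *s b2 i)" using z by (simp add: eq_neg_iff_add_eq_0)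
    hence "(\<Sum>i<k1. c i *s b1 i) \<in> S2" using vec.subspace_neg[OF s2 x2] by simp
    hence z1: "(\<Sum>i<k1. c i *s b1 i) = 0" using int x1 by blast
    hence z2: "(\<Sum>i<k2. c (k1 + i) *s b2 i) = 0" using z by simp
    have zero: "(\<Sum>i<k. (0::complex) *s b i) = 0" for k and b :: "nat \<Rightarrow> complex ^ 'n" by simp
    have "c i = 0" if "i < k1" for i using cbasis_unique[OF c1 _ that, of c "\<lambda>_. 0"] z1 by simp
    moreover have "c (k1 + i) = 0" if "i < k2" for i
      using cbasis_unique[OF c2 _ that, of "\<lambda>i. c (k1 + i)" "\<lambda>_. 0"] z2 by simp
    ultimately show "\<forall>i<k1 + k2. c i = 0"
      by (metis add_diff_inverse_nat add_less_cancel_left)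
  next
    have sub1: "b1 ` {..<k1} \<subseteq> catb k1 b1 b2 ` {..<k1 + k2}"
    proof
      fix x assume "x \<in> b1 ` {..<k1}"
      then obtain i where "i < k1" "x = b1 i" by blast
      thus "x \<in> catb k1 b1 b2 ` {..<k1 + k2}" unfolding catb_def by (intro image_eqI[of _ _ i]) auto
    qed
    have sub2: "b2 ` {..<k2} \<subseteq> catb k1 b1 b2 ` {..<k1 + k2}"
    proof
      fix x assume "x \<in> b2 ` {..<k2}"
      then obtain i where "i < k2" "x = b2 i" by blast
      thus "x \<in> catb k1 b1 b2 ` {..<k1 + k2}" unfolding catb_def by (intro image_eqI[of _ _ "k1 + i"]) auto
    qed
    have "x \<in> vec.span (catb k1 b1 b2 ` {..<k1 + k2})" for x
    proof -
      obtain x1 x2 where xx: "x1 \<in> S1" "x2 \<in> S2" "x = x1 + x2" using sm[of x] by blast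
      have "x1 \<in> vec.span (catb k1 b1 b2 ` {..<k1 + k2})" using xx(1) sp1 vec.span_mono[OF sub1] by blast
      moreover have "x2 \<in> vec.span (catb k1 b1 b2 ` {..<k1 + k2})" using xx(2) sp2 vec.span_mono[OF sub2] by blast
      ultimately show "x \<in> vec.span (catb k1 b1 b2 ` {..<k1 + k2})" using xx(3) vec.span_add by simp
    qed
    thus "vec.span (catb k1 b1 b2 ` {..<k1 + k2}) = UNIV" by blast
  qed
  have mat: "A *v catb k1 b1 b2 j = (\<Sum>i<k1 + k2. catB k1 B1 B2 i j *s catb k1 b1 b2 i)" if j: "j < k1 + k2" for j
  proof (cases "j < k1")
    case True
    have "A *v catb k1 b1 b2 j = (\<Sum>i<k1. B1 i j *s b1 i)" using r1 True unfolding rep_ok_def catb_def by simp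
    also have "\<dots> = (\<Sum>i<k1 + k2. catB k1 B1 B2 i j *s catb k1 b1 b2 i)"
      unfolding catb_split using True by (simp add: catB_def)
    finally show ?thesis .
  next
    case False
    define j' where "j' = j - k1"
    have j': "j' < k2" "j = k1 + j'" using j False unfolding j'_def by auto
    have "A *v catb k1 b1 b2 j = (\<Sum>i<k2. B2 i j' *s b2 i)" using r2 j' unfolding rep_ok_def catb_def by simp
    also have "\<dots> = (\<Sum>i<k1 + k2. catB k1 B1 B2 i j *s catb k1 b1 b2 i)"
      unfolding catb_split using j' by (simp add: catB_def)
    finally show ?thesis .
  qed
  show ?thesis unfolding rep_ok_def using cb mat by blast
qed

section \<open>Permutation matrices\<close>

lemma perm_mv:
  assumes p: "p permutes (UNIV :: 'n::finite set)"
  shows "perm_mat p *v x = (\<chi> i. x $ (inv_into UNIV p i))"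
proof -
  have "(perm_mat p *v x) $ i = x $ (inv_into UNIV p i)" for i
  proof -
    have "(perm_mat p *v x) $ i = (\<Sum>j\<in>UNIV. (if i = p j then 1 else 0) * x $ j)"
      unfolding perm_mat_def matrix_vector_mult_def by simp
    also have "\<dots> = (\<Sum>j\<in>UNIV. if j = inv_into UNIV p i then x $ j else 0)"
    proof (rule sum.cong)
      fix j show "(if i = p j then 1 else 0) * x $ j = (if j = inv_into UNIV p i then x $ j else 0)"
        using permutes_inv_eq[OF p, of i j] by auto
    qed simp
    also have "\<dots> = x $ (inv_into UNIV p i)" by (simp add: sum.delta')
    finally show ?thesis .
  qed
  thus ?thesis by (simp add: Finite_Cartesian_Product.vec_eq_iff)
qed

lemma det_fn_perm:
  assumes s: "\<sigma> permutes {..<k}"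
  shows "det_fn k (\<lambda>i j. if i = \<sigma> j then 1 else 0) = of_int (sign \<sigma>)"
proof -
  have si: "inv_into UNIV \<sigma> permutes {..<k}" using permutes_inv[OF s] .
  have tm: "of_int (sign p) * (\<Prod>i<k. (if i = \<sigma> (p i) then 1 else 0)) =
      (if p = inv_into UNIV \<sigma> then of_int (sign p) else (0::complex))" if p: "p permutes {..<k}" for p
  proof (cases "p = inv_into UNIV \<sigma>")
    case True
    have "\<sigma> (p i) = i" for i unfolding True using permutes_inverses(1)[OF s] by simp
    thus ?thesis using True by simp
  next
    case False
    have "\<exists>i<k. i \<noteq> \<sigma> (p i)"
    proof (rule ccontr)
      assume "\<not> (\<exists>i<k. i \<noteq> \<sigma> (p i))"
      hence h: "\<forall>i<k. \<sigma> (p i) = i" by auto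
      have "p i = inv_into UNIV \<sigma> i" for i
      proof (cases "i < k")
        case True
        hence "inv_into UNIV \<sigma> (\<sigma> (p i)) = inv_into UNIV \<sigma> i" using h by simp
        thus ?thesis using permutes_inverses(2)[OF s] by simp
      next
        case False
        thus ?thesis using permutes_not_in[OF p] permutes_not_in[OF si] by simp
      qed
      hence "p = inv_into UNIV \<sigma>" by (rule ext)
      thus False using False by simp
    qed
    then obtain i where "i < k" "i \<noteq> \<sigma> (p i)" by blast
    hence "(\<Prod>i<k. (if i = \<sigma> (p i) then 1 else 0)) = (0::complex)"
      by (intro prod_zero) auto
    thus ?thesis using False by simp
  qed
  have "det_fn k (\<lambda>i j. if i = \<sigma> j then 1 else 0) =
      (\<Sum>p | p permutes {..<k}. if p = inv_into UNIV \<sigma> then of_int (sign p) else 0)"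
    unfolding det_fn_def by (rule sum.cong) (use tm in auto)
  also have "\<dots> = of_int (sign (inv_into UNIV \<sigma>))"
    using si by (simp add: sum.delta' finite_permutations)
  also have "\<dots> = of_int (sign \<sigma>)"
    using sign_inverse[OF permutes_imp_permutation[OF _ s]] by simp
  finally show ?thesis .
qed

lemma std_rep:
  fixes v :: "'n::finite \<Rightarrow> 'n"
  assumes v: "v permutes UNIV"
  shows "\<exists>b B. rep_ok (perm_mat v) UNIV CARD('n) b B \<and> det_fn CARD('n) B = of_int (sign v)"
proof -
  define N where "N = CARD('n)"
  obtain e :: "nat \<Rightarrow> 'n" where e0: "bij_betw e {0..<card (UNIV :: 'n set)} UNIV" using ex_bij_betw_nat_finite[of "UNIV :: 'n set"] by auto
  have e: "bij_betw e {..<N} UNIV" using e0 unfolding N_def by (simp add: lessThan_atLeast0)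
  define f where "f = inv_into {..<N} e"
  have f: "bij_betw f UNIV {..<N}" unfolding f_def by (rule bij_betw_inv_into[OF e])
  have fe: "f (e j) = j" if "j < N" for j
    unfolding f_def using inv_into_f_f[OF bij_betw_imp_inj_on[OF e]] that by simp
  have ef: "e (f y) = y" for y
    unfolding f_def using f_inv_into_f[of y e "{..<N}"] bij_betw_imp_surj_on[OF e] by simp
  have einj: "e i = e j \<longleftrightarrow> i = j" if "i < N" "j < N" for i j
    using bij_betw_imp_inj_on[OF e] that by (auto simp: inj_on_def)
  define \<sigma> where "\<sigma> = map_permutation UNIV f v"
  have sp: "\<sigma> permutes {..<N}" unfolding \<sigma>_def by (rule map_permutation_permutes[OF f v])
  have sj: "\<sigma> j = f (v (e j))" if "j < N" for j
  proof -
    have "\<sigma> (f (e j)) = f (v (e j))" unfolding \<sigma>_def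
      by (rule map_permutation_apply) (use bij_betw_imp_inj_on[OF f] in auto)
    thus ?thesis using fe[OF that] by simp
  qed
  have sign_eq: "sign \<sigma> = sign v" unfolding \<sigma>_def
    by (rule sign_map_permutation[OF bij_betw_imp_inj_on[OF f] v]) simp
  define b where "b = (\<lambda>i. axis (e i) (1::complex) :: complex ^ 'n)"
  define B where "B = (\<lambda>i j. if i = \<sigma> j then (1::complex) else 0)"
  have vb: "perm_mat v *v b j = b (\<sigma> j)" if "j < N" for j
  proof -
    have "perm_mat v *v b j = (\<chi> i. b j $ inv_into UNIV v i)" by (rule perm_mv[OF v])
    also have "\<dots> = axis (v (e j)) 1"
      unfolding b_def axis_def using permutes_inv_eq[OF v]
      by (simp add: Finite_Cartesian_Product.vec_eq_iff)
    also have "\<dots> = b (\<sigma> j)" unfolding b_def sj[OF that] ef ..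
    finally show ?thesis .
  qed
  have cb: "is_cbasis UNIV N b"
  proof (rule cbasis_intro)
    fix c assume z: "(\<Sum>i<N. c i *s b i) = 0"
    show "\<forall>i<N. c i = 0"
    proof (intro allI impI)
      fix i0 assume i0: "i0 < N"
      have "(\<Sum>i<N. c i *s b i) $ e i0 = (\<Sum>i<N. if i = i0 then c i else 0)"
        unfolding sum_component b_def
        by (rule sum.cong) (use einj i0 in \<open>auto simp: axis_def\<close>)
      also have "\<dots> = c i0" using i0 by (simp add: sum.delta)
      finally show "c i0 = 0" using z by simp
    qed
  next
    have "x \<in> vec.span (b ` {..<N})" for x
    proof -
      have "x = (\<Sum>k\<in>UNIV. (x $ k) *s axis k 1)" by (rule basis_expansion[symmetric])
      also have "\<dots> = (\<Sum>i<N. (x $ e i) *s b i)" unfolding b_def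
        by (rule sum.reindex_bij_betw[OF e, symmetric])
      finally show ?thesis using lc_in_span[where k=N and c="\<lambda>i. x $ e i" and b=b] by simp
    qed
    thus "vec.span (b ` {..<N}) = UNIV" by blast
  qed
  have rep: "rep_ok (perm_mat v) UNIV N b B"
    unfolding rep_ok_def
  proof (intro conjI cb allI impI)
    fix j assume j: "j < N"
    have sjN: "\<sigma> j < N" using permutes_in_image[OF sp] j by simp
    show "perm_mat v *v b j = (\<Sum>i<N. B i j *s b i)"
      unfolding vb[OF j] B_def using lc_delta[OF sjN, of b] by (simp add: eq_commute[of _ "\<sigma> j"])
  qed
  have "det_fn N B = of_int (sign v)" unfolding B_def det_fn_perm[OF sp] sign_eq ..
  thus ?thesis using rep unfolding N_def by blast
qed


lemma perm_mat_comp: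
  assumes p: "p permutes (UNIV :: 'n::finite set)" and q: "q permutes (UNIV :: 'n set)"
  shows "perm_mat p *v (perm_mat q *v x) = perm_mat (p \<circ> q) *v x"
proof -
  have pq: "p \<circ> q permutes UNIV" using permutes_compose[OF q p] .
  have "inv_into UNIV (p \<circ> q) = inv_into UNIV q \<circ> inv_into UNIV p"
    using o_inv_distrib[OF permutes_bij[OF p] permutes_bij[OF q]] .
  thus ?thesis unfolding perm_mv[OF p] perm_mv[OF q] perm_mv[OF pq] by simp
qed

lemma perm_mat_id: "perm_mat id *v x = x"
  using perm_mv[OF permutes_id, of x] by (simp add: Finite_Cartesian_Product.vec_eq_iff)

lemma sum_shift_periodic:
  fixes g :: "nat \<Rightarrow> 'a::ab_group_add"
  assumes "g m = g 0" shows "(\<Sum>t<m. g (Suc t)) = (\<Sum>t<m. g t)"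
proof -
  have "(\<Sum>t<Suc m. g t) = g 0 + (\<Sum>t<m. g (Suc t))" by (rule sum.lessThan_Suc_shift)
  moreover have "(\<Sum>t<Suc m. g t) = (\<Sum>t<m. g t) + g m" by simp
  ultimately show ?thesis using assms by (simp add: algebra_simps)
qed

lemma sum_const_vec: "(\<Sum>t<m. (x :: complex ^ 'n)) = of_nat m *s x"
proof (induct m)
  case 0 show ?case by (simp del: sum_constant)
next
  case (Suc m)
  have "(\<Sum>t<Suc m. x) = (\<Sum>t<m. x) + x" by (rule sum.lessThan_Suc)
  also have "\<dots> = of_nat m *s x + 1 *s x" using Suc by simp
  also have "\<dots> = of_nat (Suc m) *s x" by (simp add: vector_sadd_rdistrib[symmetric] add.commute)
  finally show ?case .
qed

lemma root_unity:
  assumes m: "m > (0::nat)"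
  defines "z \<equiv> exp (2 * of_real pi * \<i> / of_nat m)"
  shows "z ^ m = 1" and "\<And>k. 0 < k \<Longrightarrow> k < m \<Longrightarrow> z ^ k \<noteq> 1"
proof -
  have zk: "z ^ k = exp (of_nat k * (2 * of_real pi * \<i> / of_nat m))" for k
    unfolding z_def by (rule exp_of_nat_mult[symmetric])
  show "z ^ m = 1" unfolding zk using m by simp
  fix k assume k: "0 < k" "k < m"
  show "z ^ k \<noteq> 1"
  proof
    assume "z ^ k = 1"
    then obtain n :: int where n: "Im (of_nat k * (2 * of_real pi * \<i> / of_nat m)) = of_int (2 * n) * pi"
      unfolding zk exp_eq_1 by blast
    have "Im (of_nat k * (2 * of_real pi * \<i> / of_nat m)) = 2 * pi * real k / real m"
      by (simp add: field_simps)
    hence "2 * pi * real k / real m = 2 * real_of_int n * pi" using n by (simp add: mult.commute mult.left_commute)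
    hence "real k = real_of_int n * real m" using m pi_gt_zero by (simp add: field_simps)
    hence "int k = n * int m" by (metis of_int_eq_iff of_int_mult of_int_of_nat_eq)
    moreover have k0: "int k > 0" "int k < int m" using k by auto
    ultimately have kn: "int k = n * int m" by simp
    have "n \<ge> 1"
    proof (rule ccontr)
      assume "\<not> n \<ge> 1"
      hence "n \<le> 0" by simp
      hence "n * int m \<le> 0" by (simp add: mult_nonpos_nonneg)
      thus False using kn k0 by simp
    qed
    hence "1 * int m \<le> n * int m" by (intro mult_right_mono) auto
    thus False using kn k0 by linarith
  qed
qed

lemma fix_M_decomp:
  fixes u :: "'n::finite \<Rightarrow> 'n"
  assumes u: "u permutes UNIV"
  shows "\<And>y. y \<in> Fix (perm_mat u) \<Longrightarrow> y \<in> M_sp (perm_mat u) \<Longrightarrow> y = 0"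
    and "\<And>x. \<exists>x1\<in>Fix (perm_mat u). \<exists>x2\<in>M_sp (perm_mat u). x = x1 + x2"
proof -
  obtain m where m: "u ^^ m = id" "m > 0" using bij_finite_order[OF permutes_bij[OF u]] by blast
  define U where "U = perm_mat u"
  define Up where "Up = (\<lambda>t x. perm_mat (u ^^ t) *v x)"
  have ut: "u ^^ t permutes UNIV" for t by (rule permutes_funpow[OF u])
  have Up0: "Up 0 x = x" for x unfolding Up_def funpow.simps(1) by (rule perm_mat_id)
  have Upm: "Up m x = x" for x unfolding Up_def m(1) by (rule perm_mat_id)
  have UpS: "Up t (U *v x) = Up (Suc t) x" for t x
    unfolding Up_def U_def perm_mat_comp[OF ut u] funpow_Suc_right ..
  have UUp: "U *v (Up t x) = Up (Suc t) x" for t x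
    unfolding Up_def U_def perm_mat_comp[OF u ut] funpow.simps(2) ..
  have Up_add: "Up t (x + y) = Up t x + Up t y" for t x y
    unfolding Up_def by (simp add: matrix_vector_right_distrib)
  have Up_scale: "Up t (c *s x) = c *s Up t x" for t c x
    unfolding Up_def by (rule mv_scale)
  define P where "P = (\<lambda>x. (1 / of_nat m) *s (\<Sum>t<m. Up t x))"
  have PU: "P (U *v y) = P y" for y
  proof -
    have "(\<Sum>t<m. Up t (U *v y)) = (\<Sum>t<m. Up (Suc t) y)" using UpS by simp
    also have "\<dots> = (\<Sum>t<m. Up t y)" by (rule sum_shift_periodic) (simp add: Up0 Upm)
    finally show ?thesis unfolding P_def by simp
  qed
  have UP: "U *v P y = P y" for y
  proof -
    have "U *v P y = (1 / of_nat m) *s (\<Sum>t<m. U *v Up t y)" unfolding P_def by (simp add: mv_scale mv_sum)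
    also have "(\<Sum>t<m. U *v Up t y) = (\<Sum>t<m. Up (Suc t) y)" using UUp by simp
    also have "\<dots> = (\<Sum>t<m. Up t y)" by (rule sum_shift_periodic) (simp add: Up0 Upm)
    finally show ?thesis unfolding P_def .
  qed
  have P_add: "P (x + y) = P x + P y" for x y
    unfolding P_def Up_add by (simp add: sum.distrib vector_add_ldistrib)
  have P_scale: "P (c *s x) = c *s P x" for c x
    unfolding P_def Up_scale by (simp add: vec.scale_sum_right[symmetric] vector_smult_assoc mult.commute)
  have P0: "P 0 = 0" using P_scale[of 0 0] by simp
  have Pfix: "P y = y" if "y \<in> Fix U" for y
  proof -
    have Uy: "U *v y = y" using that unfolding Fix_def by simp
    have "Up t y = y" for t
    proof (induct t)
      case 0 show ?case by (rule Up0)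
    next
      case (Suc t)
      have "Up (Suc t) y = U *v Up t y" using UUp by simp
      also have "\<dots> = y" using Suc Uy by simp
      finally show ?case .
    qed
    hence "(\<Sum>t<m. Up t y) = (\<Sum>t<m. y)" by (simp del: sum_constant)
    hence "(\<Sum>t<m. Up t y) = of_nat m *s y" using sum_const_vec[where m=m and x=y] by (simp del: sum_constant)
    hence "P y = (1 / of_nat m) *s (of_nat m *s y)" unfolding P_def by (simp del: sum_constant)
    also have "\<dots> = y" using m(2) by (simp add: vector_smult_assoc)
    finally show ?thesis .
  qed
  have PM: "P y = 0" if "y \<in> M_sp U" for y
    using that unfolding M_sp_def
  proof (induct rule: vec.span_induct_alt)
    case base show ?case by (rule P0)
  next
    case (step c x y)
    then obtain d where d: "d \<noteq> 1" "U *v x = d *s x" by blast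
    have "P x = d *s P x" using PU[of x] d(2) P_scale by simp
    hence e0: "(1 - d) *s P x = 0" by (simp add: vector_sub_rdistrib)
    have "1 - d \<noteq> 0" using d(1) by simp
    hence "P x = 0" using vector_mul_eq_0[of "1 - d" "P x"] e0 by blast
    thus ?case using step P_add P_scale by simp
  qed
  show "y = 0" if "y \<in> Fix (perm_mat u)" "y \<in> M_sp (perm_mat u)" for y
    using Pfix[of y] PM[of y] that unfolding U_def by simp
  show "\<exists>x1\<in>Fix (perm_mat u). \<exists>x2\<in>M_sp (perm_mat u). x = x1 + x2" for x
  proof -
    define z where "z = exp (2 * of_real pi * \<i> / of_nat m)"
    have zm: "z ^ m = 1" unfolding z_def by (rule root_unity(1)[OF m(2)])
    have zk: "z ^ k \<noteq> 1" if "0 < k" "k < m" for k unfolding z_def by (rule root_unity(2)[OF m(2) that])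
    have znz: "z \<noteq> 0" unfolding z_def by simp
    define f where "f = (\<lambda>r. (1 / of_nat m) *s (\<Sum>t<m. (z ^ (r * t)) *s Up t x))"
    have eig: "U *v f r = inverse (z ^ r) *s f r" for r
    proof -
      define g where "g = (\<lambda>t. (z ^ (r * t)) *s Up t x)"
      have gm: "g m = g 0" unfolding g_def using Up0 Upm zm by (simp add: power_mult[symmetric] mult.commute[of r] power_mult)
      have gS: "g (Suc t) = z ^ r *s ((z ^ (r * t)) *s Up (Suc t) x)" for t
        unfolding g_def by (simp add: vector_smult_assoc power_add)
      have "z ^ r *s (U *v f r) = (1 / of_nat m) *s (\<Sum>t<m. z ^ r *s ((z ^ (r * t)) *s Up (Suc t) x))"
        unfolding f_def by (simp add: mv_scale mv_sum UUp vec.scale_sum_right vector_smult_assoc mult.commute)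
      also have "\<dots> = (1 / of_nat m) *s (\<Sum>t<m. g (Suc t))" using gS by simp
      also have "\<dots> = (1 / of_nat m) *s (\<Sum>t<m. g t)" using sum_shift_periodic[OF gm] by simp
      also have "\<dots> = f r" unfolding f_def g_def ..
      finally have "z ^ r *s (U *v f r) = f r" .
      hence "inverse (z ^ r) *s (z ^ r *s (U *v f r)) = inverse (z ^ r) *s f r" by simp
      thus ?thesis using znz by (simp add: vector_smult_assoc)
    qed
    have f0: "f 0 = P x" unfolding f_def P_def by simp
    have geo: "(\<Sum>r<m. z ^ (r * t)) = (if t = 0 then of_nat m else 0)" if t: "t < m" for t
    proof (cases "t = 0")
      case True thus ?thesis by simp
    next
      case False
      have ne: "z ^ t \<noteq> 1" using zk[of t] False t by simp
      have "(\<Sum>r<m. z ^ (r * t)) = (\<Sum>r<m. (z ^ t) ^ r)" by (simp add: power_mult[symmetric] mult.commute)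
      also have "\<dots> = ((z ^ t) ^ m - 1) / (z ^ t - 1)" by (rule geometric_sum[OF ne])
      also have "(z ^ t) ^ m = 1" using zm by (simp add: power_mult[symmetric] mult.commute[of t] power_mult)
      finally show ?thesis using False by simp
    qed
    have sumf: "(\<Sum>r<m. f r) = x"
    proof -
      have "(\<Sum>r<m. f r) = (1 / of_nat m) *s (\<Sum>r<m. \<Sum>t<m. (z ^ (r * t)) *s Up t x)"
        unfolding f_def by (simp add: vec.scale_sum_right)
      also have "(\<Sum>r<m. \<Sum>t<m. (z ^ (r * t)) *s Up t x) = (\<Sum>t<m. \<Sum>r<m. (z ^ (r * t)) *s Up t x)"
        by (rule sum.swap)
      also have "\<dots> = (\<Sum>t<m. (\<Sum>r<m. z ^ (r * t)) *s Up t x)" by (simp add: vec.scale_sum_left)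
      also have "\<dots> = (\<Sum>t<m. if t = 0 then of_nat m *s x else 0)"
        by (rule sum.cong) (use geo Up0 in auto)
      also have "\<dots> = of_nat m *s x" using m(2) by (simp add: sum.delta)
      finally show ?thesis using m(2) by (simp add: vector_smult_assoc)
    qed
    obtain m' where m': "m = Suc m'" using m(2) by (cases m) auto
    have "x = f 0 + (\<Sum>r<m'. f (Suc r))" using sumf unfolding m' sum.lessThan_Suc_shift by simp
    hence xs: "x = P x + (\<Sum>r<m'. f (Suc r))" using f0 by simp
    have "(\<Sum>r<m'. f (Suc r)) \<in> M_sp (perm_mat u)"
      unfolding M_sp_def
    proof (intro vec.span_sum vec.span_base)
      fix r assume r: "r \<in> {..<m'}"
      have "z ^ Suc r \<noteq> 1" using zk[of "Suc r"] r m' by simp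
      hence "inverse (z ^ Suc r) \<noteq> 1" by (metis inverse_1 inverse_inverse_eq)
      moreover have "perm_mat u *v f (Suc r) = inverse (z ^ Suc r) *s f (Suc r)" using eig unfolding U_def .
      ultimately show "f (Suc r) \<in> (\<Union>c\<in>- {1}. {x. perm_mat u *v x = c *s x})" by blast
    qed
    moreover have "P x \<in> Fix (perm_mat u)" using UP unfolding Fix_def U_def by simp
    ultimately show ?thesis using xs by blast
  qed
qed


definition ind :: "'n set \<Rightarrow> complex ^ 'n" where
  "ind X = (\<chi> i. if i \<in> X then 1 else 0)"

definition Wsp :: "('n \<Rightarrow> 'n) set \<Rightarrow> (complex ^ 'n) set" where
  "Wsp G = {x. \<forall>y z. relg G y z \<longrightarrow> x $ y = x $ z}"

lemma orbs_disj:
  assumes Gb: "\<forall>g\<in>G. bij g" and X: "X \<in> orbs G" and Y: "Y \<in> orbs G" and y: "y \<in> X" "y \<in> Y"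
  shows "X = Y"
proof -
  obtain x where x: "X = cls G x" using X unfolding orbs_def by blast
  obtain x' where x': "Y = cls G x'" using Y unfolding orbs_def by blast
  have "relg G x y" "relg G x' y" using y x x' unfolding cls_def by auto
  hence "cls G x = cls G y" "cls G x' = cls G y" using cls_eq_iff[OF Gb] by blast+
  thus ?thesis using x x' by simp
qed

lemma orbs_mem_iff:
  assumes Gb: "\<forall>g\<in>G. bij g" and X: "X \<in> orbs G" and r: "relg G y z"
  shows "y \<in> X \<longleftrightarrow> z \<in> X"
proof -
  obtain x where x: "X = cls G x" using X unfolding orbs_def by blast
  have r2: "relg G z y" using relg_sym[OF Gb r] .
  have "relg G x y \<longleftrightarrow> relg G x z" using relg_trans[of G x y z] relg_trans[of G x z y] r r2 by blast
  thus ?thesis unfolding x cls_def by simp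
qed

lemma self_in_cls: "y \<in> cls G y"
  unfolding cls_def using relg_refl by simp

lemma Wsp_subspace: "vec.subspace (Wsp G)"
  unfolding vec.subspace_def Wsp_def by (auto simp: vector_add_component)

lemma class_basis:
  fixes G :: "('n::finite \<Rightarrow> 'n) set"
  assumes Gb: "\<forall>g\<in>G. bij g"
  obtains idx where "bij_betw idx {..<card (orbs G)} (orbs G)"
    "is_cbasis (Wsp G) (card (orbs G)) (\<lambda>i. ind (idx i))"
proof -
  define K where "K = card (orbs G)"
  obtain idx where idx0: "bij_betw idx {0..<K} (orbs G)"
    using ex_bij_betw_nat_finite[OF finite_orbs[of G]] unfolding K_def by blast
  have idx: "bij_betw idx {..<K} (orbs G)" using idx0 by (simp add: lessThan_atLeast0)
  have inO: "idx i \<in> orbs G" if "i < K" for i using bij_betw_apply[OF idx] that by simp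
  have inj: "idx i = idx j \<longleftrightarrow> i = j" if "i < K" "j < K" for i j
    using bij_betw_imp_inj_on[OF idx] that by (auto simp: inj_on_def)
  have cover: "\<exists>i<K. y \<in> idx i" for y
  proof -
    have "cls G y \<in> idx ` {..<K}" using bij_betw_imp_surj_on[OF idx] cls_in_orbs[of G y] by simp
    then obtain i where i: "i \<in> {..<K}" "cls G y = idx i" by (rule imageE)
    have "y \<in> idx i" using self_in_cls[of y G] i(2) by simp
    thus ?thesis using i(1) by blast
  qed
  have uniq: "i = j" if "i < K" "j < K" "y \<in> idx i" "y \<in> idx j" for i j y
    using orbs_disj[OF Gb inO[OF that(1)] inO[OF that(2)] that(3,4)] inj that(1,2) by simp
  have cb: "is_cbasis (Wsp G) K (\<lambda>i. ind (idx i))"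
  proof (rule cbasis_intro)
    fix c assume z: "(\<Sum>i<K. c i *s ind (idx i)) = 0"
    show "\<forall>i<K. c i = 0"
    proof (intro allI impI)
      fix i0 assume i0: "i0 < K"
      obtain y where y: "y \<in> idx i0"
        using inO[OF i0] unfolding orbs_def by (metis imageE self_in_cls)
      have "(\<Sum>i<K. c i *s ind (idx i)) $ y = (\<Sum>i<K. if i = i0 then c i else 0)"
        unfolding sum_component
      proof (rule sum.cong)
        fix i assume i: "i \<in> {..<K}"
        show "(c i *s ind (idx i)) $ y = (if i = i0 then c i else 0)"
        proof (cases "i = i0")
          case True thus ?thesis using y by (simp add: ind_def)
        next
          case False
          hence "y \<notin> idx i" using uniq[of i i0 y] i i0 y by auto
          thus ?thesis using False by (simp add: ind_def)
        qed
      qed simp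
      also have "\<dots> = c i0" using i0 by (simp add: sum.delta)
      finally show "c i0 = 0" using z by simp
    qed
  next
    show "vec.span ((\<lambda>i. ind (idx i)) ` {..<K}) = Wsp G"
    proof
      have "ind (idx i) \<in> Wsp G" if "i < K" for i
        unfolding Wsp_def ind_def using orbs_mem_iff[OF Gb inO[OF that]] by auto
      thus "vec.span ((\<lambda>i. ind (idx i)) ` {..<K}) \<subseteq> Wsp G"
        by (intro vec.span_minimal Wsp_subspace) auto
      show "Wsp G \<subseteq> vec.span ((\<lambda>i. ind (idx i)) ` {..<K})"
      proof
        fix x assume x: "x \<in> Wsp G"
        define rep where "rep = (\<lambda>i. SOME y. y \<in> idx i)"
        have rep: "rep i \<in> idx i" if "i < K" for i
          using inO[OF that] unfolding rep_def orbs_def by (metis imageE self_in_cls someI)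
        have "x = (\<Sum>i<K. (x $ rep i) *s ind (idx i))"
        proof -
          have "x $ y = (\<Sum>i<K. (x $ rep i) *s ind (idx i)) $ y" for y
          proof -
            obtain i0 where i0: "i0 < K" "y \<in> idx i0" using cover by blast
            have "(\<Sum>i<K. (x $ rep i) *s ind (idx i)) $ y = (\<Sum>i<K. if i = i0 then x $ rep i else 0)"
              unfolding sum_component
            proof (rule sum.cong)
              fix i assume i: "i \<in> {..<K}"
              show "(x $ rep i *s ind (idx i)) $ y = (if i = i0 then x $ rep i else 0)"
              proof (cases "i = i0")
                case True thus ?thesis using i0 by (simp add: ind_def)
              next
                case False
                hence "y \<notin> idx i" using uniq[of i i0 y] i i0 by auto
                thus ?thesis using False by (simp add: ind_def)
              qed
            qed simp
            also have "\<dots> = x $ rep i0" using i0 by (simp add: sum.delta)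
            also have "\<dots> = x $ y"
            proof -
              obtain w where w: "idx i0 = cls G w" using inO[OF i0(1)] unfolding orbs_def by blast
              have "relg G w y" "relg G w (rep i0)" using i0(2) rep[OF i0(1)] w unfolding cls_def by auto
              hence "relg G y (rep i0)" using relg_sym[OF Gb, of w y] relg_trans[of G y w "rep i0"] by blast
              thus ?thesis using x unfolding Wsp_def by simp
            qed
            finally show ?thesis by simp
          qed
          thus ?thesis by (subst Finite_Cartesian_Product.vec_eq_iff) blast
        qed
        thus "x \<in> vec.span ((\<lambda>i. ind (idx i)) ` {..<K})"
          using lc_in_span[where k=K and c="\<lambda>i. x $ rep i" and b="\<lambda>i. ind (idx i)"] by simp
      qed
    qed
  qed
  show ?thesis using that[OF idx[unfolded K_def] cb[unfolded K_def]] .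
qed

lemma dim_Wsp: "\<forall>g\<in>G. bij g \<Longrightarrow> vec.dim (Wsp (G :: ('n::finite \<Rightarrow> 'n) set)) = card (orbs G)"
  using class_basis cbasis_dim by metis

lemma fixed_space_Wsp:
  fixes H :: "('n::finite \<Rightarrow> 'n) set"
  assumes H: "is_subgroup H T" and Tb: "\<forall>t\<in>T. bij t"
  shows "fixed_space H = Wsp H"
proof -
  have Hb: "\<forall>h\<in>H. bij h" using H Tb unfolding is_subgroup_def by blast
  have Hinv: "inv_into UNIV h \<in> H" if "h \<in> H" for h using H that unfolding is_subgroup_def by blast
  have pH: "perm_gen H = H" by (rule subgroup_perm_gen[OF H])
  have "x \<in> fixed_space H \<longleftrightarrow> (\<forall>g\<in>H. \<forall>i. x $ (g i) = x $ i)" for x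
  proof -
    have "x \<in> fixed_space H \<longleftrightarrow> (\<forall>g\<in>H. \<forall>i. x $ (inv_into UNIV g i) = x $ i)"
    proof -
      have pm: "perm_mat g *v x = (\<chi> i. x $ inv_into UNIV g i)" if "g \<in> H" for g
      proof -
        have "g permutes UNIV" by (intro bij_imp_permutes) (use Hb that in auto)
        thus ?thesis by (rule perm_mv)
      qed
      have "x \<in> fixed_space H \<longleftrightarrow> (\<forall>g\<in>H. (\<chi> i. x $ inv_into UNIV g i) = x)"
        unfolding fixed_space_def using pm by simp
      also have "\<dots> \<longleftrightarrow> (\<forall>g\<in>H. \<forall>i. x $ (inv_into UNIV g i) = x $ i)"
        by (simp add: Finite_Cartesian_Product.vec_eq_iff)
      finally show ?thesis .
    qed
    also have "\<dots> \<longleftrightarrow> (\<forall>g\<in>H. \<forall>i. x $ (g i) = x $ i)"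
    proof
      assume a: "\<forall>g\<in>H. \<forall>i. x $ (inv_into UNIV g i) = x $ i"
      show "\<forall>g\<in>H. \<forall>i. x $ (g i) = x $ i"
      proof (intro ballI allI)
        fix g i assume g: "g \<in> H"
        have "inv_into UNIV (inv_into UNIV g) = g" using inv_inv_eq[of g] Hb g by blast
        thus "x $ (g i) = x $ i" using a Hinv[OF g] by metis
      qed
    next
      assume a: "\<forall>g\<in>H. \<forall>i. x $ (g i) = x $ i"
      thus "\<forall>g\<in>H. \<forall>i. x $ (inv_into UNIV g i) = x $ i" using Hinv by blast
    qed
    finally show ?thesis .
  qed
  moreover have "x \<in> Wsp H \<longleftrightarrow> (\<forall>g\<in>H. \<forall>i. x $ (g i) = x $ i)" for x
  proof
    assume "x \<in> Wsp H"
    hence a: "\<And>y z. (\<exists>h\<in>H. h y = z) \<Longrightarrow> x $ y = x $ z" unfolding Wsp_def relg_def pH by blast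
    show "\<forall>g\<in>H. \<forall>i. x $ (g i) = x $ i"
    proof (intro ballI allI)
      fix g i assume "g \<in> H"
      hence "x $ i = x $ (g i)" by (intro a) blast
      thus "x $ (g i) = x $ i" by simp
    qed
  next
    assume a: "\<forall>g\<in>H. \<forall>i. x $ (g i) = x $ i"
    have "x $ y = x $ z" if e: "\<exists>h\<in>H. h y = z" for y z
    proof -
      obtain h where "h \<in> H" "h y = z" using e by blast
      thus ?thesis using a by metis
    qed
    thus "x \<in> Wsp H" unfolding Wsp_def relg_def pH by blast
  qed
  ultimately show ?thesis by blast
qed

lemma Wsp_iff: "x \<in> Wsp G \<longleftrightarrow> (\<forall>h\<in>perm_gen G. \<forall>i. x $ (h i) = x $ i)"
proof
  assume "x \<in> Wsp G"
  hence a: "\<And>y z. (\<exists>h\<in>perm_gen G. h y = z) \<Longrightarrow> x $ y = x $ z" unfolding Wsp_def relg_def by blast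
  show "\<forall>h\<in>perm_gen G. \<forall>i. x $ (h i) = x $ i"
  proof (intro ballI allI)
    fix g i assume "g \<in> perm_gen G"
    hence "x $ i = x $ (g i)" by (intro a) blast
    thus "x $ (g i) = x $ i" by simp
  qed
next
  assume a: "\<forall>h\<in>perm_gen G. \<forall>i. x $ (h i) = x $ i"
  have "x $ y = x $ z" if e: "\<exists>h\<in>perm_gen G. h y = z" for y z
  proof -
    obtain h where "h \<in> perm_gen G" "h y = z" using e by blast
    thus ?thesis using a by metis
  qed
  thus "x \<in> Wsp G" unfolding Wsp_def relg_def by blast
qed

lemma Fix_Wsp:
  fixes u :: "'n::finite \<Rightarrow> 'n"
  assumes u: "u permutes UNIV"
  shows "Fix (perm_mat u) = Wsp {u}"
proof -
  have bu: "bij u" using permutes_bij[OF u] .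
  have gb: "\<forall>g\<in>{u}. bij g" using bu by simp
  have "x \<in> Fix (perm_mat u) \<longleftrightarrow> (\<forall>i. x $ (inv_into UNIV u i) = x $ i)" for x
    unfolding Fix_def perm_mv[OF u] by (simp add: Finite_Cartesian_Product.vec_eq_iff)
  moreover have "(\<forall>i. x $ (inv_into UNIV u i) = x $ i) \<longleftrightarrow> (\<forall>h\<in>perm_gen {u}. \<forall>i. x $ (h i) = x $ i)" for x
  proof
    assume a: "\<forall>i. x $ (inv_into UNIV u i) = x $ i"
    have au: "x $ (u i) = x $ i" for i
    proof -
      have "x $ (inv_into UNIV u (u i)) = x $ (u i)" using a by blast
      thus ?thesis using bij_inv_eq_iff[OF bu] by (metis bij_is_inj inv_f_f[OF bij_is_inj[OF bu]])
    qed
    show "\<forall>h\<in>perm_gen {u}. \<forall>i. x $ (h i) = x $ i"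
    proof
      fix h assume "h \<in> perm_gen {u}"
      thus "\<forall>i. x $ (h i) = x $ i"
      proof (induct rule: perm_gen.induct)
        case gen_id thus ?case by simp
      next
        case (gen_base g) thus ?case using au by simp
      next
        case (gen_comp g h) thus ?case by simp
      next
        case (gen_inv g)
        have bg: "bij g" using perm_gen_bij[OF gb gen_inv(1)] .
        show ?case
        proof
          fix i
          have "x $ (g (inv_into UNIV g i)) = x $ (inv_into UNIV g i)" using gen_inv(2) by blast
          thus "x $ (inv_into UNIV g i) = x $ i" using bij_inv_eq_iff[OF bg] by metis
        qed
      qed
    qed
  next
    assume "\<forall>h\<in>perm_gen {u}. \<forall>i. x $ (h i) = x $ i"
    moreover have "inv_into UNIV u \<in> perm_gen {u}" by (intro perm_gen.gen_inv perm_gen.gen_base) simp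
    ultimately show "\<forall>i. x $ (inv_into UNIV u i) = x $ i" by blast
  qed
  ultimately show ?thesis using Wsp_iff by blast
qed

lemma perm_mat_ind:
  assumes v: "v permutes UNIV"
  shows "perm_mat v *v ind X = ind (v ` X)"
proof -
  have "inv_into UNIV v i \<in> X \<longleftrightarrow> i \<in> v ` X" for i
  proof
    assume "inv_into UNIV v i \<in> X"
    moreover have "v (inv_into UNIV v i) = i" using permutes_inverses(1)[OF v] by simp
    ultimately show "i \<in> v ` X" by (metis imageI)
  next
    assume "i \<in> v ` X"
    then obtain y where "y \<in> X" "i = v y" by blast
    thus "inv_into UNIV v i \<in> X" using permutes_inverses(2)[OF v] by simp
  qed
  thus ?thesis unfolding perm_mv[OF v] ind_def by (simp add: Finite_Cartesian_Product.vec_eq_iff)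
qed

lemma Fix_rep:
  fixes u v :: "'n::finite \<Rightarrow> 'n"
  assumes u: "u permutes UNIV" and v: "v permutes UNIV" and c: "u \<circ> v = v \<circ> u"
  shows "\<exists>K b B. rep_ok (perm_mat v) (Fix (perm_mat u)) K b B \<and> det_fn K B = of_int (sign (tau {u} v))"
proof -
  have bu: "bij u" and bv: "bij v" using permutes_bij u v by auto
  have gb: "\<forall>g\<in>{u}. bij g" using bu by simp
  have gc: "\<forall>h\<in>{u}. v \<circ> h = h \<circ> v" using c by simp
  define K where "K = card (orbs {u})"
  obtain idx where idx: "bij_betw idx {..<K} (orbs {u})" and cb0: "is_cbasis (Wsp {u}) K (\<lambda>i. ind (idx i))"
    using class_basis[OF gb] unfolding K_def by blast
  have cb: "is_cbasis (Fix (perm_mat u)) K (\<lambda>i. ind (idx i))" using cb0 Fix_Wsp[OF u] by simp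
  define \<tau> where "\<tau> = tau {u} v"
  have tp: "\<tau> permutes orbs {u}" unfolding \<tau>_def by (rule tau_permutes[OF gb bv gc])
  define f where "f = inv_into {..<K} idx"
  have f: "bij_betw f (orbs {u}) {..<K}" unfolding f_def by (rule bij_betw_inv_into[OF idx])
  have fi: "f (idx j) = j" if "j < K" for j unfolding f_def using bij_betw_inv_into_left[OF idx] that by simp
  have iF: "idx (f X) = X" if "X \<in> orbs {u}" for X unfolding f_def using bij_betw_inv_into_right[OF idx that] .
  define \<sigma> where "\<sigma> = map_permutation (orbs {u}) f \<tau>"
  have sp: "\<sigma> permutes {..<K}" unfolding \<sigma>_def by (rule map_permutation_permutes[OF f tp])
  have sign_eq: "sign \<sigma> = sign \<tau>" unfolding \<sigma>_def
    by (rule sign_map_permutation[OF bij_betw_imp_inj_on[OF f] tp finite_orbs])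
  have inO: "idx j \<in> orbs {u}" if "j < K" for j using bij_betw_apply[OF idx] that by simp
  have sj: "idx (\<sigma> j) = v ` idx j" if j: "j < K" for j
  proof -
    have "\<sigma> (f (idx j)) = f (\<tau> (idx j))" unfolding \<sigma>_def
      by (rule map_permutation_apply[OF bij_betw_imp_inj_on[OF f] inO[OF j]])
    hence "\<sigma> j = f (\<tau> (idx j))" using fi[OF j] by simp
    moreover have "\<tau> (idx j) \<in> orbs {u}" using permutes_in_image[OF tp] inO[OF j] by simp
    ultimately have "idx (\<sigma> j) = \<tau> (idx j)" using iF by simp
    also have "\<dots> = v ` idx j" unfolding \<tau>_def tau_def using inO[OF j] by simp
    finally show ?thesis .
  qed
  define B where "B = (\<lambda>i j. if i = \<sigma> j then (1::complex) else 0)"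
  have rep: "rep_ok (perm_mat v) (Fix (perm_mat u)) K (\<lambda>i. ind (idx i)) B"
    unfolding rep_ok_def
  proof (intro conjI cb allI impI)
    fix j assume j: "j < K"
    have sjK: "\<sigma> j < K" using permutes_in_image[OF sp] j by simp
    have "perm_mat v *v ind (idx j) = ind (idx (\<sigma> j))" unfolding perm_mat_ind[OF v] sj[OF j] ..
    also have "\<dots> = (\<Sum>i<K. (if i = \<sigma> j then 1 else 0) *s ind (idx i))"
      using lc_delta[OF sjK, of "\<lambda>i. ind (idx i)"] by simp
    finally show "perm_mat v *v ind (idx j) = (\<Sum>i<K. B i j *s ind (idx i))" unfolding B_def .
  qed
  have "det_fn K B = of_int (sign \<tau>)" unfolding B_def det_fn_perm[OF sp] sign_eq ..
  thus ?thesis using rep unfolding \<tau>_def by blast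
qed

lemma M_invariant:
  fixes u v :: "'n::finite \<Rightarrow> 'n"
  assumes u: "u permutes UNIV" and v: "v permutes UNIV" and c: "u \<circ> v = v \<circ> u"
    and x: "x \<in> M_sp (perm_mat u)"
  shows "perm_mat v *v x \<in> M_sp (perm_mat u)"
proof -
  have UV: "perm_mat u *v (perm_mat v *v y) = perm_mat v *v (perm_mat u *v y)" for y
    unfolding perm_mat_comp[OF u v] perm_mat_comp[OF v u] c ..
  show ?thesis using x unfolding M_sp_def
  proof (induct rule: vec.span_induct_alt)
    case base show ?case using vec.span_zero by simp
  next
    case (step c' x y)
    then obtain d where d: "d \<noteq> 1" "perm_mat u *v x = d *s x" by blast
    have "perm_mat u *v (perm_mat v *v x) = d *s (perm_mat v *v x)" using UV[of x] d(2) by (simp add: mv_scale)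
    hence "perm_mat v *v x \<in> (\<Union>c\<in>- {1}. {x. perm_mat u *v x = c *s x})" using d(1) by blast
    hence "perm_mat v *v x \<in> vec.span (\<Union>c\<in>- {1}. {x. perm_mat u *v x = c *s x})" by (rule vec.span_base)
    hence "c' *s (perm_mat v *v x) + perm_mat v *v y \<in> vec.span (\<Union>c\<in>- {1}. {x. perm_mat u *v x = c *s x})"
      using step(2) by (intro vec.span_add vec.span_scale)
    thus ?case by (simp add: matrix_vector_right_distrib mv_scale)
  qed
qed

lemma sign_cases_complex: "of_int (sign p) = (1::complex) \<or> of_int (sign p) = (-1::complex)"
  unfolding sign_def by simp

lemma pullback_value:
  fixes u v :: "'n::finite \<Rightarrow> 'n"
  assumes u: "u permutes UNIV" and v: "v permutes UNIV" and c: "u \<circ> v = v \<circ> u" and ev: "evenperm v"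
  shows "pullback_coeff (perm_mat v) (perm_mat u) = of_int (sign (tau {u} v))"
proof -
  obtain K b1 B1 where r1: "rep_ok (perm_mat v) (Fix (perm_mat u)) K b1 B1"
    and d1: "det_fn K B1 = of_int (sign (tau {u} v))" using Fix_rep[OF u v c] by blast
  have sub2: "vec.subspace (M_sp (perm_mat u))" unfolding M_sp_def by (rule vec.subspace_span)
  obtain k2 b2 B2 where r2: "rep_ok (perm_mat v) (M_sp (perm_mat u)) k2 b2 B2"
    using rep_exists[OF sub2] M_invariant[OF u v c] by blast
  have rb: "rep_ok (perm_mat v) UNIV (K + k2) (catb K b1 b2) (catB K B1 B2)"
    by (rule rep_block[OF r1 r2 sub2 fix_M_decomp(1)[OF u] fix_M_decomp(2)[OF u]])
  obtain bs Bs where rs: "rep_ok (perm_mat v) UNIV CARD('n) bs Bs" and ds: "det_fn CARD('n) Bs = of_int (sign v)"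
    using std_rep[OF v] by blast
  have sv: "sign v = 1" using ev unfolding sign_def by simp
  have "det_fn K B1 * det_fn k2 B2 = 1"
    using det_invariant[OF rb rs] det_catB[of K k2 B1 B2] ds sv by simp
  moreover have "det_on (perm_mat v) (M_sp (perm_mat u)) = det_fn k2 B2" by (rule det_on_eq[OF r2])
  ultimately have e: "of_int (sign (tau {u} v)) * det_on (perm_mat v) (M_sp (perm_mat u)) = 1" using d1 by simp
  define d where "d = det_on (perm_mat v) (M_sp (perm_mat u))"
  define s where "s = (of_int (sign (tau {u} v)) :: complex)"
  have e': "s * d = 1" using e unfolding s_def d_def .
  have "inverse d = s"
    using sign_cases_complex[of "tau {u} v"] unfolding s_def[symmetric]
  proof
    assume s1: "s = 1"
    hence "d = 1" using e' by simp
    thus ?thesis using s1 by simp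
  next
    assume s1: "s = -1"
    hence "- d = 1" using e' by simp
    hence "d = -1" by (metis minus_minus)
    thus ?thesis using s1 by simp
  qed
  thus ?thesis unfolding pullback_coeff_def d_def s_def .
qed

lemma sign_one_iff: "of_int (sign p) = (1::complex) \<longleftrightarrow> evenperm p"
  unfolding sign_def by simp

lemma sign_mone_iff: "of_int (sign p) = (-1::complex) \<longleftrightarrow> \<not> evenperm p"
  unfolding sign_def by simp

theorem proposition8:
  fixes u v :: "'n::finite \<Rightarrow> 'n"
  assumes "u permutes (UNIV :: 'n set)" and "v permutes (UNIV :: 'n set)"
    and "evenperm u" and "evenperm v"
    and "u \<circ> v = v \<circ> u"
  shows "(parity_condition (perm_gen {u, v}) \<longleftrightarrow>
            pullback_coeff (perm_mat u) (perm_mat v) = 1 \<and>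
            pullback_coeff (perm_mat v) (perm_mat u) = 1)
       \<and> (\<not> parity_condition (perm_gen {u, v}) \<longrightarrow>
            pullback_coeff (perm_mat u) (perm_mat v) = -1 \<or>
            pullback_coeff (perm_mat v) (perm_mat u) = -1)"
proof -
  note u = assms(1) and v = assms(2) and eu = assms(3) and ev = assms(4) and c = assms(5)
  have bu: "bij u" and bv: "bij v" using permutes_bij u v by auto
  define E where "E = even (CARD('n) + card (orbs {u, v}))"
  have c1: "pullback_coeff (perm_mat v) (perm_mat u) = of_int (sign (tau {u} v))"
    by (rule pullback_value[OF u v c ev])
  have c2: "pullback_coeff (perm_mat u) (perm_mat v) = of_int (sign (tau {v} u))"
    by (rule pullback_value[OF v u c[symmetric] eu])
  have p1: "evenperm (tau {u} v) \<longleftrightarrow> even (card (orbs {u}) + card (orbs (insert v {u})))"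
    by (rule parity_insert) (use bu bv c in auto)
  have p2: "evenperm (tau {v} u) \<longleftrightarrow> even (card (orbs {v}) + card (orbs (insert u {v})))"
    by (rule parity_insert) (use bu bv c in auto)
  have ou: "even (CARD('n) + card (orbs {u}))" using parity_single[OF bu] eu by simp
  have ov: "even (CARD('n) + card (orbs {v}))" using parity_single[OF bv] ev by simp
  have i1: "insert v {u} = {u, v}" by blast
  have ar: "even ((n::nat) + a) \<Longrightarrow> (even (a + b) \<longleftrightarrow> even (n + b))" for n a b by presburger
  have p1': "evenperm (tau {u} v) \<longleftrightarrow> even (card (orbs {u}) + card (orbs {u, v}))"
    using p1 i1 by (simp only:)
  have e1: "evenperm (tau {u} v) \<longleftrightarrow> E" unfolding p1' E_def by (rule ar[OF ou])
  have e2: "evenperm (tau {v} u) \<longleftrightarrow> E" unfolding p2 E_def by (rule ar[OF ov])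
  define T where "T = perm_gen {u, v}"
  have gb: "\<forall>g\<in>{u, v}. bij g" using bu bv by blast
  have Tb: "\<forall>t\<in>T. bij t" unfolding T_def using perm_gen_bij[OF gb] by blast
  have dimH: "vec.dim (fixed_space H) = card (orbs H)" if H: "is_subgroup H T" for H
  proof -
    have Hb: "\<forall>h\<in>H. bij h" using H Tb unfolding is_subgroup_def by blast
    show ?thesis unfolding fixed_space_Wsp[OF H Tb] by (rule dim_Wsp[OF Hb])
  qed
  have PC: "parity_condition T \<longleftrightarrow> E"
  proof
    assume pc: "parity_condition T"
    have TT: "is_subgroup T T" unfolding is_subgroup_def T_def
      by (auto intro: perm_gen.gen_id perm_gen.gen_comp perm_gen.gen_inv)
    have "even (vec.dim (fixed_space T) + CARD('n))" using pc TT unfolding parity_condition_def by blast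
    moreover have "orbs T = orbs {u, v}"
    proof (rule orbs_cong)
      have "perm_gen T = T" by (rule subgroup_perm_gen[OF TT])
      thus "perm_gen T = perm_gen {u, v}" by (simp only: T_def)
    qed
    ultimately show E using dimH[OF TT] unfolding E_def by (simp add: add.commute)
  next
    assume e: E
    show "parity_condition T" unfolding parity_condition_def
    proof (intro allI impI)
      fix H assume H: "is_subgroup H T"
      have "even (CARD('n) + card (orbs H))"
        by (rule parity_all_subgroups[OF bu bv c eu ev e[unfolded E_def] H[unfolded T_def]])
      thus "even (vec.dim (fixed_space H) + CARD('n))" using dimH[OF H] by (simp add: add.commute)
    qed
  qed
  show ?thesis
    unfolding T_def[symmetric] c1 c2 PC sign_one_iff sign_mone_iff e1 e2 by blast
qed


end
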